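(* Let $X$ and $Y$ be non-trivial separable Fréchet spaces over the same field $\mathbb{K}\in\{\mathbb{R},\mathbb{C}\}$, let $N\in\mathbb{N}$ with $N\geq 2$, and write $\mathbb{N}_N=\{1,\dots,N\}$. Suppose that $X_0$ is a dense linear subspace of $X$ and that, for each $j\in\mathbb{N}_N$, $(T_j(t))_{t\geq 0}\subseteq L(X,Y)$ is a strongly continuous operator family such that: (a) $\lim_{t\to\infty}T_j(t)x=0$ for all $x\in X_0$ and $j\in\mathbb{N}_N$; (b) there exist $x\in X$, $m\in\mathbb{N}$ and a set $B\subseteq[0,\infty)$ with $\overline{dens}(B)=1$ such that $\lim_{t\to\infty,\,t\in B}p^Y_m(T_j(t)x)=\infty$ for each $j\in\mathbb{N}_N$ (resp. $\lim_{t\to\infty,\,t\in B}\|T_j(t)x\|_Y=\infty$ for each $j\in\mathbb{N}_N$, if $Y$ is a Banach space). Then there exist a dense linear subspace $S$ of $X$ and a number $\sigma>0$ such that for each $\epsilon>0$ and for each pair $x,y\in S$ of distinct points, $$\overline{dens}\Bigl(\bigcap_{j\in\mathbb{N}_N}\{s\geq 0: d_Y(T_j(s)x,T_j(s)y)\geq\sigma\}\Bigr)=1$$ and $$\overline{dens}\Bigl(\bigcap_{j\in\mathbb{N}_N}\{s\geq 0: d_Y(T_j(s)x,T_j(s)y)<\epsilon\}\Bigr)=1.$$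
   Context: The topology of $X$ is induced by a fundamental system $(p_n)_{n\in\mathbb{N}}$ of increasing seminorms and that of $Y$ by a fundamental system $(p_n^Y)_{n\in\mathbb{N}}$ of increasing seminorms. The metric on $Y$ is $d_Y(x,y)=\sum_{n=1}^\infty 2^{-n}\frac{p^Y_n(x-y)}{1+p^Y_n(x-y)}$; if $Y$ is a Banach space, one instead takes $d_Y(x,y)=\|x-y\|_Y$. For a (Lebesgue measurable) set $D\subseteq[0,\infty)$, its upper density is $\overline{dens}(D)=\limsup_{t\to+\infty}\frac{m(D\cap[0,t])}{t}$, where $m$ is Lebesgue measure. *)

theory Defs
  imports "HOL-Analysis.Analysis"
begin

definition seminorm_on :: "('k::real_normed_field \<Rightarrow> 'x::ab_group_add \<Rightarrow> 'x) \<Rightarrow> ('x \<Rightarrow> real) \<Rightarrow> bool" where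
  "seminorm_on sc q \<longleftrightarrow> (\<forall>x. q x \<ge> 0) \<and> (\<forall>x y. q (x + y) \<le> q x + q y)
     \<and> (\<forall>c x. q (sc c x) = norm c * q x)"

text \<open>The metric induced by a fundamental system of seminorms p 0, p 1, ...
  (p 0 plays the role of p_1 in the paper):
  d(x,y) = sum over n>=1 of 2^-n * p_n(x-y) / (1 + p_n(x-y)).\<close>
definition seminorm_metric :: "(nat \<Rightarrow> 'x::ab_group_add \<Rightarrow> real) \<Rightarrow> 'x \<Rightarrow> 'x \<Rightarrow> real" where
  "seminorm_metric p x y = (\<Sum>n. (1/2)^(Suc n) * (p n (x - y) / (1 + p n (x - y))))"

abbreviation seminorm_topology :: "(nat \<Rightarrow> 'x::ab_group_add \<Rightarrow> real) \<Rightarrow> 'x topology" where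
  "seminorm_topology p \<equiv> Metric_space.mtopology UNIV (seminorm_metric p)"

definition frechet_space :: "('k::real_normed_field \<Rightarrow> 'x::ab_group_add \<Rightarrow> 'x) \<Rightarrow> (nat \<Rightarrow> 'x \<Rightarrow> real) \<Rightarrow> bool" where
  "frechet_space sc p \<longleftrightarrow> Vector_Spaces.vector_space sc
     \<and> (\<forall>n. seminorm_on sc (p n))
     \<and> (\<forall>n x. p n x \<le> p (Suc n) x)
     \<and> (\<forall>x. x \<noteq> 0 \<longrightarrow> (\<exists>n. p n x \<noteq> 0))
     \<and> Metric_space.mcomplete UNIV (seminorm_metric p)"

definition upper_density :: "real set \<Rightarrow> ereal" where
  "upper_density D = Limsup at_top (\<lambda>t. ereal (measure lebesgue (D \<inter> {0..t}) / t))"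

end

theory Submission
  imports Defs
begin


locale fre =
  fixes sc :: "'k::real_normed_field \<Rightarrow> 'x::ab_group_add \<Rightarrow> 'x"
    and p :: "nat \<Rightarrow> 'x \<Rightarrow> real"
  assumes fr: "frechet_space sc p"
begin

lemma vs: "Vector_Spaces.vector_space sc"
  using fr by (simp add: frechet_space_def)

sublocale vector_space sc by (rule vs)

lemma semi: "seminorm_on sc (p n)"
  using fr by (simp add: frechet_space_def)

lemma p_nonneg[simp]: "0 \<le> p n x"
  using semi[of n] by (simp add: seminorm_on_def)

lemma p_add: "p n (x + y) \<le> p n x + p n y"
  using semi[of n] by (simp add: seminorm_on_def)

lemma p_scale: "p n (sc c x) = norm c * p n x"
  using semi[of n] by (simp add: seminorm_on_def)

lemma p_zero[simp]: "p n 0 = 0"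
  using p_scale[of n 0 0] by simp

lemma p_minus[simp]: "p n (- x) = p n x"
  using p_scale[of n "-1" x] by simp

lemma p_commute: "p n (x - y) = p n (y - x)"
  by (metis minus_diff_eq p_minus)

lemma p_diff: "p n x - p n y \<le> p n (x - y)"
  using p_add[of n "x - y" y] by simp

lemma p_sum: "p n (sum f A) \<le> (\<Sum>a\<in>A. p n (f a))"
  by (induct A rule: infinite_finite_induct) (auto intro: order_trans[OF p_add])

lemma p_mono: "n \<le> n' \<Longrightarrow> p n x \<le> p n' x"
proof (induct n' rule: dec_induct)
  case (step k) then show ?case using fr by (auto simp: frechet_space_def intro: order_trans)
qed simp

lemma p_sep: "x \<noteq> 0 \<Longrightarrow> \<exists>n. p n x \<noteq> 0"
  using fr by (simp add: frechet_space_def)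

abbreviation "dd \<equiv> seminorm_metric p"

definition tm :: "real \<Rightarrow> real" where "tm t = t / (1 + t)"

lemma tm_nonneg: "0 \<le> t \<Longrightarrow> 0 \<le> tm t" by (simp add: tm_def)
lemma tm_less1: "0 \<le> t \<Longrightarrow> tm t < 1" by (simp add: tm_def)
lemma tm_le: "0 \<le> t \<Longrightarrow> tm t \<le> t"
  by (simp add: tm_def divide_le_eq mult_le_cancel_left1)
lemma tm_mono: "0 \<le> s \<Longrightarrow> s \<le> t \<Longrightarrow> tm s \<le> tm t"
  by (simp add: tm_def frac_le divide_le_eq field_simps)
lemma tm_sub: assumes "0 \<le> s" "0 \<le> t" shows "tm (s + t) \<le> tm s + tm t"
proof -
  have "tm (s + t) = s / (1 + s + t) + t / (1 + s + t)"
    using assms by (simp add: tm_def add_divide_distrib add.assoc)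
  also have "\<dots> \<le> s / (1 + s) + t / (1 + t)"
  proof (rule add_mono)
    show "s / (1 + s + t) \<le> s / (1 + s)" using assms by (intro divide_left_mono) auto
    show "t / (1 + s + t) \<le> t / (1 + t)" using assms by (intro divide_left_mono) auto
  qed
  finally show ?thesis by (simp add: tm_def)
qed

lemma dd_def': "dd x y = (\<Sum>n. (1/2)^(Suc n) * tm (p n (x - y)))"
  by (simp add: seminorm_metric_def tm_def)

lemma term_summable: "summable (\<lambda>n. (1/2::real)^(Suc n) * tm (p n z))"
proof (rule summable_comparison_test[of _ "\<lambda>n. (1/2::real)^(Suc n)"])
  show "\<exists>N. \<forall>n\<ge>N. norm ((1/2::real)^(Suc n) * tm (p n z)) \<le> (1/2)^(Suc n)"
    using tm_nonneg[of "p _ z"] tm_less1[of "p _ z"] by (auto intro!: exI[of _ 0] mult_left_le less_imp_le)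
  show "summable (\<lambda>n. (1/2::real)^(Suc n))" by (simp add: summable_geometric)
qed

lemma dd_nonneg: "0 \<le> dd x y"
  unfolding dd_def' by (rule suminf_nonneg[OF term_summable]) (simp add: tm_nonneg)

lemma dd_0: "dd x y = dd (x - y) 0"
  by (simp add: seminorm_metric_def)

lemma dd_term_le: "(1/2)^(Suc n) * tm (p n (x - y)) \<le> dd x y"
  unfolding dd_def' using sum_le_suminf[OF term_summable, of "{n}"]
  by (simp add: tm_nonneg)

lemma dd_commute: "dd x y = dd y x"
  unfolding dd_def' by (simp add: p_commute)

lemma dd_triangle: "dd x z \<le> dd x y + dd y z"
proof -
  have "dd x z \<le> (\<Sum>n. (1/2)^(Suc n) * tm (p n (x - y)) + (1/2)^(Suc n) * tm (p n (y - z)))"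
    unfolding dd_def'
  proof (rule suminf_le)
    fix n
    have "tm (p n (x - z)) \<le> tm (p n (x - y) + p n (y - z))"
      using p_add[of n "x - y" "y - z"] by (intro tm_mono) auto
    also have "\<dots> \<le> tm (p n (x - y)) + tm (p n (y - z))" by (rule tm_sub) auto
    finally show "(1/2::real)^(Suc n) * tm (p n (x - z)) \<le> (1/2)^(Suc n) * tm (p n (x - y)) + (1/2)^(Suc n) * tm (p n (y - z))"
      by (simp add: distrib_left[symmetric])
  qed (intro summable_add term_summable)+
  also have "\<dots> = dd x y + dd y z"
    unfolding dd_def' by (intro suminf_add[symmetric] term_summable)
  finally show ?thesis .
qed

lemma tm_pos: "0 < t \<Longrightarrow> 0 < tm t" by (simp add: tm_def)

lemma tm_strict: "0 \<le> s \<Longrightarrow> s < t \<Longrightarrow> tm s < tm t"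
  by (simp add: tm_def field_simps)

lemma tm_less_imp: "0 \<le> s \<Longrightarrow> 0 \<le> t \<Longrightarrow> tm s < tm t \<Longrightarrow> s < t"
  using tm_mono[of t s] by (cases "t \<le> s") auto

lemma dd_eq0: "dd x y = 0 \<longleftrightarrow> x = y"
proof
  assume h: "dd x y = 0"
  show "x = y"
  proof (rule ccontr)
    assume "x \<noteq> y"
    then obtain n where "p n (x - y) \<noteq> 0" using p_sep[of "x - y"] by auto
    then have "0 < p n (x - y)" using p_nonneg[of n "x - y"] by linarith
    then have "0 < (1/2::real)^(Suc n) * tm (p n (x - y))" by (simp add: tm_pos)
    with dd_term_le[of n x y] h show False by simp
  qed
qed (simp add: dd_def' tm_def)

sublocale X: Metric_space UNIV dd
  by unfold_locales (auto simp: dd_nonneg dd_commute dd_eq0 intro: dd_triangle)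

lemma dd_lower: "(1/2)^(Suc n) * tm (p n x) \<le> dd x 0"
  using dd_term_le[of n x 0] by (simp only: diff_zero)

lemma p_small: assumes "dd x 0 < (1/2)^(Suc n) * tm e" "0 < e" shows "p n x < e"
proof -
  have h: "(1/2::real)^(Suc n) * tm (p n x) < (1/2)^(Suc n) * tm e"
    using dd_lower[of n x] assms(1) by linarith
  have "tm (p n x) < tm e"
    by (rule mult_left_less_imp_less[OF h]) simp
  moreover have "0 \<le> e" using assms(2) by simp
  ultimately show ?thesis by (meson tm_less_imp p_nonneg)
qed

lemma half_sum: "(\<Sum>n. (1/2::real)^(Suc n)) = 1"
  using power_half_series by (rule sums_unique[symmetric])

lemma half_summable: "summable (\<lambda>n. (1/2::real)^(Suc n))"
  using power_half_series by (rule sums_summable)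

lemma dd_upper: "dd x 0 \<le> p L x + (1/2)^(Suc L)"
proof -
  let ?g = "\<lambda>n. (1/2::real)^(Suc n) * tm (p n x)"
  have sg: "summable ?g" using term_summable[of x] by simp
  have "dd x 0 = (\<Sum>n. ?g (n + Suc L)) + sum ?g {..<Suc L}"
    unfolding dd_def' using suminf_split_initial_segment[OF sg, of "Suc L"] by simp
  also have "(\<Sum>n. ?g (n + Suc L)) \<le> (\<Sum>n. (1/2::real)^(Suc L) * (1/2)^(Suc n))"
  proof (rule suminf_le)
    fix n
    have "?g (n + Suc L) \<le> (1/2::real)^(Suc (n + Suc L))"
      using tm_less1[of "p (n + Suc L) x"] by (intro mult_left_le) auto
    also have "\<dots> = (1/2::real)^(Suc L) * (1/2)^(Suc n)" by (simp only: power_add[symmetric]) (simp add: add.commute)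
    finally show "?g (n + Suc L) \<le> (1/2::real)^(Suc L) * (1/2)^(Suc n)" .
    show "summable (\<lambda>n. ?g (n + Suc L))" by (rule summable_ignore_initial_segment[OF sg])
    show "summable (\<lambda>n. (1/2::real)^(Suc L) * (1/2)^(Suc n))" by (rule summable_mult[OF half_summable])
  qed
  also have "(\<Sum>n. (1/2::real)^(Suc L) * (1/2)^(Suc n)) = (1/2)^(Suc L)"
    using suminf_mult[OF half_summable, of "(1/2::real)^(Suc L)"] half_sum by simp
  also have "sum ?g {..<Suc L} \<le> (\<Sum>n<Suc L. (1/2::real)^(Suc n) * p L x)"
  proof (rule sum_mono)
    fix n assume "n \<in> {..<Suc L}"
    then have "tm (p n x) \<le> p L x" using tm_le[of "p n x"] p_mono[of n L x] by auto
    then show "?g n \<le> (1/2)^(Suc n) * p L x" by (intro mult_left_mono) auto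
  qed
  also have "\<dots> = (\<Sum>n<Suc L. (1/2::real)^(Suc n)) * p L x" by (rule sum_distrib_right[symmetric])
  also have "\<dots> \<le> 1 * p L x"
  proof (rule mult_right_mono)
    have "(\<Sum>n<Suc L. (1/2::real)^(Suc n)) \<le> (\<Sum>n. (1/2::real)^(Suc n))"
      by (intro sum_le_suminf half_summable) auto
    then show "(\<Sum>n<Suc L. (1/2::real)^(Suc n)) \<le> 1" using half_sum by simp
  qed simp
  finally show ?thesis by simp
qed

lemma limit_p: assumes "limitin X.mtopology f l F" shows "((\<lambda>x. p n (f x - l)) \<longlongrightarrow> 0) F"
proof (rule tendstoI)
  fix e :: real assume e: "0 < e"
  have "0 < (1/2::real)^(Suc n) * tm e" using e by (simp add: tm_pos)
  have lim: "\<forall>\<epsilon>>0. eventually (\<lambda>x. f x \<in> UNIV \<and> dd (f x) l < \<epsilon>) F"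
    using assms unfolding X.limitin_metric by blast
  have "eventually (\<lambda>x. dd (f x) l < (1/2)^(Suc n) * tm e) F"
    using lim[rule_format, OF \<open>0 < (1/2::real)^(Suc n) * tm e\<close>] by simp
  then show "eventually (\<lambda>x. dist (p n (f x - l)) 0 < e) F"
  proof (rule eventually_mono)
    fix x assume "dd (f x) l < (1/2)^(Suc n) * tm e"
    then have "p n (f x - l) < e" using e by (intro p_small) (simp add: dd_0[symmetric])
    then show "dist (p n (f x - l)) 0 < e" by simp
  qed
qed

lemma p_cont: "continuous_map X.mtopology euclidean (p n)"
proof -
  have "continuous_map X.mtopology Met_TC.mtopology (p n)"
    unfolding X.metric_continuous_map[OF Met_TC.Metric_space_axioms]
  proof (intro conjI ballI allI impI)
    fix a and e :: real assume "0 < e"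
    show "\<exists>\<delta>>0. \<forall>x. x \<in> UNIV \<and> dd a x < \<delta> \<longrightarrow> dist (p n a) (p n x) < e"
    proof (intro exI conjI allI impI)
      show "0 < (1/2::real)^(Suc n) * tm e" using \<open>0 < e\<close> by (simp add: tm_pos)
      fix x assume "x \<in> UNIV \<and> dd a x < (1/2)^(Suc n) * tm e"
      then have "p n (a - x) < e" using \<open>0 < e\<close> by (intro p_small) (simp add: dd_0[symmetric])
      moreover have "\<bar>p n a - p n x\<bar> \<le> p n (a - x)"
        using p_diff[of n a x] p_diff[of n x a] p_commute[of n a x] by linarith
      ultimately show "dist (p n a) (p n x) < e" by (simp add: dist_real_def)
    qed
  qed simp
  then show ?thesis by simp
qed

lemma dd_scale_le: assumes "0 \<le> r" "r \<le> 1" shows "dd (sc (of_real r) x) 0 \<le> dd x 0"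
  unfolding dd_def'
proof (rule suminf_le)
  fix n
  have "p n (sc (of_real r) x) \<le> p n x" using assms by (simp add: p_scale mult_left_le_one_le)
  then show "(1/2::real)^(Suc n) * tm (p n (sc (of_real r) x - 0)) \<le> (1/2)^(Suc n) * tm (p n (x - 0))"
    by (intro mult_left_mono tm_mono) auto
qed (rule term_summable)+

lemma dd_sum: "dd (sum f A) 0 \<le> (\<Sum>a\<in>A. dd (f a) 0)"
proof (induct A rule: infinite_finite_induct)
  case (insert a A)
  have "dd (f a + sum f A) 0 \<le> dd (f a + sum f A) (sum f A) + dd (sum f A) 0" by (rule dd_triangle)
  also have "dd (f a + sum f A) (sum f A) = dd (f a) 0" by (simp add: dd_0[of "f a + sum f A"])
  finally show ?case using insert by simp
qed (auto simp: dd_eq0)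


lemma dd_cont:
  assumes "continuous_map Z X.mtopology f" "continuous_map Z X.mtopology g"
  shows "continuous_map Z euclidean (\<lambda>x. dd (f x) (g x))"
  using continuous_map_mdist[of Z "metric (UNIV, dd)" f g] assms by simp

lemma tail_bound:
  assumes lim: "limitin X.mtopology g L sequentially"
    and bd: "\<And>N. N0 \<le> N \<Longrightarrow> p n (g N - g N0) \<le> \<beta>"
  shows "p n (L - g N0) \<le> \<beta>"
proof -
  have "(\<lambda>N. p n (g N - L) + \<beta>) \<longlonglongrightarrow> 0 + \<beta>"
    by (intro tendsto_add limit_p[OF lim] tendsto_const)
  moreover have "\<exists>N0'. \<forall>N\<ge>N0'. p n (L - g N0) \<le> p n (g N - L) + \<beta>"
  proof (intro exI[of _ N0])
  show "\<forall>N\<ge>N0. p n (L - g N0) \<le> p n (g N - L) + \<beta>"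
  proof (intro allI impI)
    fix N assume "N0 \<le> N"
    have "p n (L - g N0) \<le> p n (L - g N) + p n (g N - g N0)"
      using p_add[of n "L - g N" "g N - g N0"] by simp
    also have "p n (L - g N) = p n (g N - L)" by (rule p_commute)
    finally show "p n (L - g N0) \<le> p n (g N - L) + \<beta>" using bd[OF \<open>N0 \<le> N\<close>] by linarith
  qed
  qed
  ultimately have "p n (L - g N0) \<le> 0 + \<beta>" by (rule LIMSEQ_le_const)
  then show ?thesis by simp
qed

lemma p_rev: "p n x - p n y \<le> p n (x + y)"
  using p_add[of n "x + y" "- y"] by simp

end
lemma dens_le1: "upper_density D \<le> 1"
  unfolding upper_density_def
proof (rule Limsup_bounded)
  show "\<forall>\<^sub>F t in at_top. ereal (measure lebesgue (D \<inter> {0..t}) / t) \<le> 1"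
    using eventually_gt_at_top[of "0::real"]
  proof (rule eventually_mono)
    fix t :: real assume t: "0 < t"
    have "measure lebesgue (D \<inter> {0..t}) \<le> t"
    proof (cases "D \<inter> {0..t} \<in> sets lebesgue")
      case True
      then have "measure lebesgue (D \<inter> {0..t}) \<le> measure lebesgue {0..t}"
        by (intro measure_mono_fmeasurable) auto
      then show ?thesis using t by simp
    next
      case False then show ?thesis using t by (simp add: measure_notin_sets)
    qed
    then show "ereal (measure lebesgue (D \<inter> {0..t}) / t) \<le> 1" using t by simp
  qed
qed

lemma dens_one:
  assumes H: "\<And>\<delta> t0. 0 < \<delta> \<Longrightarrow> \<exists>t\<ge>t0. 0 < t \<and> (1 - \<delta>) * t \<le> measure lebesgue (D \<inter> {0..t})"
  shows "upper_density D = 1"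
proof (rule antisym[OF dens_le1])
  let ?g = "\<lambda>t. ereal (measure lebesgue (D \<inter> {0..t}) / t)"
  have key: "ereal (1 - \<delta>) \<le> Limsup at_top ?g" if d: "0 < \<delta>" for \<delta>
    unfolding Limsup_def
  proof (rule INF_greatest)
    fix P :: "real \<Rightarrow> bool" assume "P \<in> {P. eventually P at_top}"
    then obtain t0 where t0: "\<And>t. t \<ge> t0 \<Longrightarrow> P t" by (auto simp: eventually_at_top_linorder)
    obtain t where t: "t \<ge> t0" "0 < t" "(1 - \<delta>) * t \<le> measure lebesgue (D \<inter> {0..t})"
      using H[OF d, of t0] by blast
    have "ereal (1 - \<delta>) \<le> ?g t" using t by (simp add: field_simps)
    also have "\<dots> \<le> (SUP x\<in>Collect P. ?g x)" using t0[OF t(1)] by (intro SUP_upper) auto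
    finally show "ereal (1 - \<delta>) \<le> (SUP x\<in>Collect P. ?g x)" .
  qed
  show "1 \<le> upper_density D"
    unfolding upper_density_def
  proof (rule dense_le)
    fix y :: ereal assume "y < 1"
    show "y \<le> Limsup at_top ?g"
    proof (cases y)
      case (real r)
      then have "0 < 1 - r" using \<open>y < 1\<close> by simp
      from key[OF this] show ?thesis using real by simp
    next
      case PInf then show ?thesis using \<open>y < 1\<close> by simp
    next
      case MInf then show ?thesis by simp
    qed
  qed
qed

lemma meas_conv:
  fixes E :: "nat \<Rightarrow> real set"
  assumes meas: "\<And>k. E k \<in> sets lebesgue" and sub: "\<And>k. E k \<subseteq> {0..b}"
    and ev: "\<And>s. eventually (\<lambda>k. s \<notin> E k) sequentially" and eta: "0 < \<eta>"
  shows "eventually (\<lambda>k. measure lebesgue (E k) \<le> \<eta>) sequentially"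
proof -
  define F where "F k = (\<Union>k'\<in>{k..}. E k')" for k
  have Fm: "F k \<in> sets lebesgue" for k unfolding F_def using meas by auto
  have Fs: "F k \<subseteq> {0..b}" for k unfolding F_def using sub by auto
  have Ff: "F k \<in> lmeasurable" for k
  proof (rule bounded_set_imp_lmeasurable[OF _ Fm])
    show "bounded (F k)" using Fs[of k] bounded_subset[OF compact_imp_bounded[OF compact_Icc]] by blast
  qed
  have dec: "decseq F" unfolding F_def decseq_def by (auto intro: order_trans)
  have empty: "(\<Inter>k. F k) = {}"
  proof safe
    fix s assume "s \<in> (\<Inter>k. F k)"
    obtain K where "\<And>k. k \<ge> K \<Longrightarrow> s \<notin> E k" using ev[of s] by (auto simp: eventually_sequentially)
    then have "s \<notin> F K" unfolding F_def by auto
    then show "s \<in> {}" using \<open>s \<in> (\<Inter>k. F k)\<close> by auto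
  qed
  have "(\<lambda>k. measure lebesgue (F k)) \<longlonglongrightarrow> measure lebesgue (\<Inter>k. F k)"
  proof (rule Lim_measure_decseq)
    show "range F \<subseteq> sets lebesgue" using Fm by auto
    show "decseq F" by (rule dec)
    show "emeasure lebesgue (F k) \<noteq> \<infinity>" for k using emeasure_eq_measure2[OF Ff[of k]] by simp
  qed
  then have "(\<lambda>k. measure lebesgue (F k)) \<longlonglongrightarrow> 0" using empty by simp
  then have "eventually (\<lambda>k. measure lebesgue (F k) < \<eta>) sequentially"
    using eta by (rule order_tendstoD)
  then show ?thesis
  proof (rule eventually_mono)
    fix k assume "measure lebesgue (F k) < \<eta>"
    moreover have "measure lebesgue (E k) \<le> measure lebesgue (F k)"
      by (rule measure_mono_fmeasurable[OF _ meas Ff]) (auto simp: F_def)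
    ultimately show "measure lebesgue (E k) \<le> \<eta>" by simp
  qed
qed

lemma closed_ge: "continuous_on S g \<Longrightarrow> closed S \<Longrightarrow> closed {s\<in>S. c \<le> (g s::real)}"
  using continuous_closed_preimage[of S g "{c..}"] by (simp add: vimage_def Int_def)

lemma closed_le: "continuous_on S g \<Longrightarrow> closed S \<Longrightarrow> closed {s\<in>S. (g s::real) \<le> c}"
  using continuous_closed_preimage[of S g "{..c}"] by (simp add: vimage_def Int_def)

lemma meas_diff_ge:
  assumes "A \<in> lmeasurable" "C \<in> lmeasurable"
  shows "measure lebesgue A - measure lebesgue C \<le> measure lebesgue (A - C)"
proof -
  have "measure lebesgue A \<le> measure lebesgue ((A - C) \<union> C)"
    using assms by (intro measure_mono_fmeasurable) auto
  also have "\<dots> \<le> measure lebesgue (A - C) + measure lebesgue C"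
    using assms by (intro measure_Un_le) auto
  finally show ?thesis by simp
qed

lemma dens_freq:
  assumes "upper_density D = 1" "0 < \<delta>" "\<delta> < 1"
  shows "\<exists>t\<ge>t0. 0 < t \<and> D \<inter> {0..t} \<in> sets lebesgue \<and> (1 - \<delta>) * t \<le> measure lebesgue (D \<inter> {0..t})"
proof (rule ccontr)
  assume H: "\<not> ?thesis"
  have "\<forall>\<^sub>F t in at_top. ereal (measure lebesgue (D \<inter> {0..t}) / t) \<le> ereal (1 - \<delta>)"
    using eventually_ge_at_top[of "max t0 1"]
  proof (rule eventually_mono)
    fix t assume t: "max t0 1 \<le> t"
    have "measure lebesgue (D \<inter> {0..t}) \<le> (1 - \<delta>) * t"
    proof (cases "D \<inter> {0..t} \<in> sets lebesgue")
      case True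
      have "t0 \<le> t" "0 < t" using t by auto
      then have "\<not> (1 - \<delta>) * t \<le> measure lebesgue (D \<inter> {0..t})" using H True by blast
      then show ?thesis by simp
    next
      case False then show ?thesis using t assms by (simp add: measure_notin_sets)
    qed
    then show "ereal (measure lebesgue (D \<inter> {0..t}) / t) \<le> ereal (1 - \<delta>)"
      using t by (simp add: divide_le_eq)
  qed
  then have "upper_density D \<le> ereal (1 - \<delta>)" unfolding upper_density_def by (rule Limsup_bounded)
  then show False using assms by simp
qed

lemma closed_leb: "closed (S::real set) \<Longrightarrow> S \<in> sets lebesgue"
  by (simp add: borel_closed)

lemma meas_lt:
  fixes S :: "real set"
  assumes "continuous_on S g" "continuous_on S h" "closed S"
  shows "{s\<in>S. (g s::real) < h s} \<in> sets lebesgue"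
proof -
  have "continuous_on S (\<lambda>s. g s - h s)" using assms by (intro continuous_intros)
  then have "closed {s\<in>S. 0 \<le> g s - h s}" using assms(3) by (rule closed_ge)
  then have "S - {s\<in>S. 0 \<le> g s - h s} \<in> sets lebesgue" using assms(3) by (intro sets.Diff closed_leb)
  moreover have "{s\<in>S. g s < h s} = S - {s\<in>S. 0 \<le> g s - h s}" by (simp add: set_eq_iff not_le) blast
  ultimately show ?thesis by simp
qed

lemma meas_le:
  fixes S :: "real set"
  assumes "continuous_on S g" "continuous_on S h" "closed S"
  shows "{s\<in>S. (g s::real) \<le> h s} \<in> sets lebesgue"
proof -
  have "continuous_on S (\<lambda>s. h s - g s)" using assms by (intro continuous_intros)
  then have "closed {s\<in>S. 0 \<le> h s - g s}" using assms(3) by (rule closed_ge)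
  then have "{s\<in>S. 0 \<le> h s - g s} \<in> sets lebesgue" by (rule closed_leb)
  moreover have "{s\<in>S. g s \<le> h s} = {s\<in>S. 0 \<le> h s - g s}" by (simp add: set_eq_iff)
  ultimately show ?thesis by (simp only:)
qed

lemma meas_ex_lt:
  fixes S :: "real set"
  assumes "finite J" "\<And>j. j \<in> J \<Longrightarrow> continuous_on S (g j)" "\<And>j. j \<in> J \<Longrightarrow> continuous_on S (h j)" "closed S"
  shows "{s\<in>S. \<exists>j\<in>J. (g j s::real) < h j s} \<in> sets lebesgue"
proof -
  have "{s\<in>S. \<exists>j\<in>J. g j s < h j s} = (\<Union>j\<in>J. {s\<in>S. g j s < h j s})" by blast
  moreover have "(\<Union>j\<in>J. {s\<in>S. g j s < h j s}) \<in> sets lebesgue"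
    using assms by (intro sets.finite_UN meas_lt) simp_all
  ultimately show ?thesis by simp
qed

lemma meas_all_le:
  fixes S :: "real set"
  assumes "finite J" "\<And>j. j \<in> J \<Longrightarrow> continuous_on S (g j)" "\<And>j. j \<in> J \<Longrightarrow> continuous_on S (h j)" "closed S"
  shows "{s\<in>S. \<forall>j\<in>J. (g j s::real) \<le> h j s} \<in> sets lebesgue"
proof -
  have "{s\<in>S. \<forall>j\<in>J. g j s \<le> h j s} = S - {s\<in>S. \<exists>j\<in>J. h j s < g j s}" by (simp add: set_eq_iff) (meson not_less)
  moreover have "S \<in> sets lebesgue" using assms(4) by (rule closed_leb)
  ultimately show ?thesis using meas_ex_lt[OF assms(1,3,2,4)] by (simp add: sets.Diff)
qed


lemma meas_ex_le:
  fixes S :: "real set"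
  assumes "finite J" "\<And>j. j \<in> J \<Longrightarrow> continuous_on S (g j)" "\<And>j. j \<in> J \<Longrightarrow> continuous_on S (h j)" "closed S"
  shows "{s\<in>S. \<exists>j\<in>J. (g j s::real) \<le> h j s} \<in> sets lebesgue"
proof -
  have "{s\<in>S. \<exists>j\<in>J. g j s \<le> h j s} = (\<Union>j\<in>J. {s\<in>S. g j s \<le> h j s})" by blast
  moreover have "(\<Union>j\<in>J. {s\<in>S. g j s \<le> h j s}) \<in> sets lebesgue"
    using assms by (intro sets.finite_UN meas_le) simp_all
  ultimately show ?thesis by simp
qed

lemma meas_all_lt:
  fixes S :: "real set"
  assumes "finite J" "\<And>j. j \<in> J \<Longrightarrow> continuous_on S (g j)" "\<And>j. j \<in> J \<Longrightarrow> continuous_on S (h j)" "closed S"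
  shows "{s\<in>S. \<forall>j\<in>J. (g j s::real) < h j s} \<in> sets lebesgue"
proof -
  have "{s\<in>S. \<forall>j\<in>J. g j s < h j s} = S - {s\<in>S. \<exists>j\<in>J. h j s \<le> g j s}" by (simp add: set_eq_iff) (meson not_le)
  moreover have "S \<in> sets lebesgue" using assms(4) by (rule closed_leb)
  ultimately show ?thesis using meas_ex_le[OF assms(1,3,2,4)] by (simp add: sets.Diff)
qed

lemma geo_sum: "M \<le> N \<Longrightarrow> (\<Sum>i\<in>{M..<N}. (1/2::real)^(Suc i)) = (1/2)^M - (1/2)^N"
proof (induct N rule: dec_induct)
  case (step N)
  have "(\<Sum>i\<in>{M..<Suc N}. (1/2::real)^(Suc i)) = (1/2)^M - (1/2)^N + (1/2)^(Suc N)"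
    using step by (simp add: sum.atLeastLessThan_Suc)
  then show ?case by simp
qed simp

lemma geo_sum_le: "(\<Sum>i\<in>{M..<N}. (1/2::real)^(Suc i)) \<le> (1/2)^M"
proof (cases "M \<le> N")
  case True then show ?thesis using geo_sum[OF True] by simp
qed simp

lemma meas_union_bound:
  fixes A :: "nat \<Rightarrow> real set"
  assumes m: "\<And>l. A l \<in> sets lebesgue" and s: "\<And>l. A l \<subseteq> {0..b}"
    and le: "\<And>l. measure lebesgue (A l) \<le> (1/2)^(Suc (l + k))"
  shows "measure lebesgue (\<Union>l. A l) \<le> (1/2)^k"
proof -
  have bA: "bounded (A l)" for l using s[of l] bounded_subset[OF compact_imp_bounded[OF compact_Icc]] by blast
  have fA: "A l \<in> lmeasurable" for l by (rule bounded_set_imp_lmeasurable[OF bA m])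
  have bU: "bounded (\<Union>l. A l)" using s bounded_subset[OF compact_imp_bounded[OF compact_Icc], of "\<Union>l. A l" 0 b] by blast
  have mU: "(\<Union>l. A l) \<in> sets lebesgue" using m by blast
  have fU: "(\<Union>l. A l) \<in> lmeasurable" by (rule bounded_set_imp_lmeasurable[OF bU mU])
  have sumk: "(\<lambda>l. (1/2::real)^(Suc (l + k))) sums ((1/2)^k)"
  proof -
    have "(\<lambda>l. (1/2::real)^k * (1/2)^(Suc l)) sums ((1/2)^k * 1)"
      by (intro sums_mult power_half_series)
    then show ?thesis by (simp add: power_add mult.commute mult.left_commute)
  qed
  have "emeasure lebesgue (\<Union>l. A l) \<le> (\<Sum>l. emeasure lebesgue (A l))"
    using m by (intro emeasure_subadditive_countably) auto
  also have "\<dots> \<le> (\<Sum>l. ennreal ((1/2)^(Suc (l + k))))"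
    using le fA by (intro suminf_le) (auto simp: emeasure_eq_measure2)
  also have "\<dots> = ennreal ((1/2)^k)"
    using sumk by (simp add: suminf_ennreal2 sums_summable sums_unique[symmetric])
  finally have "ennreal (measure lebesgue (\<Union>l. A l)) \<le> ennreal ((1/2)^k)"
    using emeasure_eq_measure2[OF fU] by simp
  then show ?thesis by (simp add: ennreal_le_iff)
qed




locale setting =
  fixes scX :: "'k::real_normed_field \<Rightarrow> 'x::ab_group_add \<Rightarrow> 'x"
    and scY :: "'k \<Rightarrow> 'y::ab_group_add \<Rightarrow> 'y"
    and p :: "nat \<Rightarrow> 'x \<Rightarrow> real"
    and pY :: "nat \<Rightarrow> 'y \<Rightarrow> real"
    and N :: nat
    and X0 :: "'x set"
    and T :: "nat \<Rightarrow> real \<Rightarrow> 'x \<Rightarrow> 'y"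
  assumes X_frechet: "frechet_space scX p"
    and Y_frechet: "frechet_space scY pY"
    and X_separable: "separable_space (seminorm_topology p)"
    and X0_subspace: "module.subspace scX X0"
    and X0_dense: "(seminorm_topology p) closure_of X0 = UNIV"
    and T_linear: "\<And>j t. j \<in> {1..N} \<Longrightarrow> t \<ge> 0 \<Longrightarrow> Vector_Spaces.linear scX scY (T j t)"
    and T_cont: "\<And>j t. j \<in> {1..N} \<Longrightarrow> t \<ge> 0 \<Longrightarrow>
        continuous_map (seminorm_topology p) (seminorm_topology pY) (T j t)"
    and T_strong: "\<And>j x. j \<in> {1..N} \<Longrightarrow>
        continuous_map (top_of_set {0..}) (seminorm_topology pY) (\<lambda>t. T j t x)"
    and cond_a: "\<And>j x. j \<in> {1..N} \<Longrightarrow> x \<in> X0 \<Longrightarrow>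
        limitin (seminorm_topology pY) (\<lambda>t. T j t x) 0 at_top"
begin

sublocale XF: fre scX p by unfold_locales (rule X_frechet)
sublocale YF: fre scY pY by unfold_locales (rule Y_frechet)

abbreviation "J \<equiv> {1..N}"

lemma hom: "j \<in> J \<Longrightarrow> 0 \<le> t \<Longrightarrow> module_hom scX scY (T j t)"
  by (rule module_hom_linearI[OF T_linear])

lemma T_add: "j \<in> J \<Longrightarrow> 0 \<le> t \<Longrightarrow> T j t (x + y) = T j t x + T j t y"
  using module_hom.add[OF hom] by blast
lemma T_diff: "j \<in> J \<Longrightarrow> 0 \<le> t \<Longrightarrow> T j t (x - y) = T j t x - T j t y"
  using module_hom.diff[OF hom] by blast
lemma T_scale: "j \<in> J \<Longrightarrow> 0 \<le> t \<Longrightarrow> T j t (scX c x) = scY c (T j t x)"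
  using module_hom.scale[OF hom] by blast
lemma T_sum: "j \<in> J \<Longrightarrow> 0 \<le> t \<Longrightarrow> T j t (sum g A) = (\<Sum>a\<in>A. T j t (g a))"
  using module_hom.sum[OF hom] by blast
lemma T_zero: "j \<in> J \<Longrightarrow> 0 \<le> t \<Longrightarrow> T j t 0 = 0"
  using module_hom.zero[OF hom] by blast

lemma P_scale_real: "0 \<le> c \<Longrightarrow> pY n (scY (of_real c) u) = c * pY n u"
  by (simp add: YF.p_scale)

lemma cont_P: "j \<in> J \<Longrightarrow> continuous_on {0..} (\<lambda>s. pY n (T j s u))"
proof -
  assume j: "j \<in> J"
  have "continuous_map (top_of_set {0..}) euclidean (pY n \<circ> (\<lambda>s. T j s u))"
    by (rule continuous_map_compose[OF T_strong[OF j] YF.p_cont])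
  then show ?thesis by (simp add: o_def)
qed

lemma P_to0: "j \<in> J \<Longrightarrow> u \<in> X0 \<Longrightarrow> ((\<lambda>s. pY n (T j s u)) \<longlongrightarrow> 0) at_top"
  using YF.limit_p[OF cond_a, of j u n] by simp

lemma P_ptw: assumes "limitin XF.X.mtopology v x sequentially" "j \<in> J" "0 \<le> s"
  shows "(\<lambda>k. pY n (T j s (v k))) \<longlonglongrightarrow> pY n (T j s x)"
proof -
  have "limitin YF.X.mtopology (T j s \<circ> v) (T j s x) sequentially"
    by (rule continuous_map_limit[OF T_cont[OF assms(2,3)] assms(1)])
  then have "((\<lambda>k. pY n (T j s (v k) - T j s x)) \<longlongrightarrow> 0) sequentially"
    using YF.limit_p by (simp add: o_def)
  then have "((\<lambda>k. pY n (T j s (v k)) - pY n (T j s x)) \<longlongrightarrow> 0) sequentially"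
  proof (rule Lim_null_comparison[rotated])
    show "\<forall>\<^sub>F k in sequentially. norm (pY n (T j s (v k)) - pY n (T j s x)) \<le> pY n (T j s (v k) - T j s x)"
      using YF.p_diff[of n "T j s (v _)" "T j s x"] YF.p_diff[of n "T j s x" "T j s (v _)"]
        YF.p_commute[of n "T j s x" "T j s (v _)"]
      by (intro always_eventually allI) (simp add: abs_le_iff)
  qed
  then show ?thesis by (simp add: LIM_zero_iff)
qed

end

locale setting2 = setting +
  fixes xb and m :: nat and B :: "real set" and v
  assumes B_sub: "B \<subseteq> {0..}" and B_dens: "upper_density B = 1"
    and B_lim: "\<And>j. j \<in> J \<Longrightarrow> filterlim (\<lambda>t. pY m (T j t xb)) at_top (inf at_top (principal B))"
    and v_X0: "\<And>k. v k \<in> X0" and v_lim: "limitin XF.X.mtopology v xb sequentially"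
begin

definition stage_ok where
"stage_ok n F b0 c y e f a b E1 E2 \<longleftrightarrow> 0 < c \<and> c \<le> 1 \<and> y \<in> X0 \<and> b0 + 1 \<le> e \<and> real n + 1 \<le> e \<and>
  f = (real n + 1) * e \<and> f \<le> a \<and> (real n + 1) * (a + 2) \<le> b \<and>
  (\<forall>u\<in>F. \<forall>s. e \<le> s \<longrightarrow> (\<forall>j\<in>J. pY n (T j s u) \<le> (1/2)^n / (real n + 1))) \<and>
  B \<inter> {0..b} \<in> sets lebesgue \<and> (1 - 1/(real n + 2)) * b \<le> measure lebesgue (B \<inter> {0..b}) \<and>
  E1 \<in> sets lebesgue \<and> E1 \<subseteq> {0..b} \<and> measure lebesgue E1 \<le> 1 \<and>
  (\<forall>s \<in> B \<inter> {a..b} - E1. \<forall>j\<in>J. real n + 1 \<le> c * pY m (T j s y)) \<and>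
  E2 \<in> sets lebesgue \<and> E2 \<subseteq> {0..f} \<and> measure lebesgue E2 \<le> (1/2)^n \<and>
  (\<forall>s\<in>{0..f} - E2. \<forall>j\<in>J. c * pY n (T j s y) \<le> (1/2)^(Suc n)) \<and>
  XF.dd (scX (of_real c) y) 0 \<le> (1/2)^n"

lemma stage:
  assumes F: "finite F" "F \<subseteq> X0"
  shows "\<exists>c y e f a b E1 E2. stage_ok n F b0 c y e f a b E1 E2"
proof -
  define \<eta> where "\<eta> = (1/2::real)^n / (real n + 1)"
  have \<eta>: "0 < \<eta>" by (simp add: \<eta>_def)
  have "eventually (\<lambda>s. \<forall>u\<in>F. \<forall>j\<in>J. pY n (T j s u) \<le> \<eta>) at_top"
  proof (intro eventually_ball_finite F(1) ballI finite_atLeastAtMost)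
    fix u j assume u: "u \<in> F" and j: "j \<in> J"
    have "eventually (\<lambda>s. pY n (T j s u) < \<eta>) at_top"
      using P_to0[OF j, of u n] u F(2) \<eta> by (auto dest: order_tendstoD(2))
    then show "eventually (\<lambda>s. pY n (T j s u) \<le> \<eta>) at_top" by (rule eventually_mono) simp
  qed
  then obtain e0 where e0: "\<And>s. e0 \<le> s \<Longrightarrow> \<forall>u\<in>F. \<forall>j\<in>J. pY n (T j s u) \<le> \<eta>"
    by (auto simp: eventually_at_top_linorder)
  define e where "e = max e0 (max (b0 + 1) (real n + 1))"
  define f where "f = (real n + 1) * e"
  have e1: "1 \<le> e" unfolding e_def by auto
  have f0: "0 \<le> f" using e1 unfolding f_def by simp
  define g where "g s = (\<Sum>j\<in>J. pY n (T j s xb))" for s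
  have "continuous_on {0..f} g" unfolding g_def
    by (intro continuous_on_sum continuous_on_subset[OF cont_P]) auto
  then have "compact (g ` {0..f})" by (rule compact_continuous_image) simp
  then obtain M0 where M0: "\<And>z. z \<in> g ` {0..f} \<Longrightarrow> norm z \<le> M0"
    using compact_imp_bounded bounded_iff by metis
  define M where "M = max M0 0"
  have M: "0 \<le> M" unfolding M_def by simp
  have Mj: "pY n (T j s xb) \<le> M" if "s \<in> {0..f}" "j \<in> J" for s j
  proof -
    have "pY n (T j s xb) \<le> g s" unfolding g_def
      by (rule member_le_sum) (use that in auto)
    also have "\<dots> \<le> M" using M0[of "g s"] that unfolding M_def by auto
    finally show ?thesis .
  qed
  define c where "c = min 1 (min ((1/2)^(Suc n) / (M + 1)) ((1/2)^(Suc (Suc n)) / (p (Suc n) xb + 1)))"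
  have c0: "0 < c" "c \<le> 1" unfolding c_def using M XF.p_nonneg[of "Suc n" xb] by (auto intro!: divide_pos_pos add_nonneg_pos)
  have c1: "c * (M + 1) \<le> (1/2)^(Suc n)"
  proof -
    have "c \<le> (1/2)^(Suc n) / (M + 1)" unfolding c_def by auto
    then show ?thesis using M by (simp add: le_divide_eq algebra_simps)
  qed
  have c2: "c * p (Suc n) xb \<le> (1/2)^(Suc (Suc n))"
  proof -
    have "c \<le> (1/2)^(Suc (Suc n)) / (p (Suc n) xb + 1)" unfolding c_def by auto
    then have "c * (p (Suc n) xb + 1) \<le> (1/2)^(Suc (Suc n))"
      using XF.p_nonneg[of "Suc n" xb] by (simp add: le_divide_eq add_nonneg_pos algebra_simps)
    moreover have "c * p (Suc n) xb \<le> c * (p (Suc n) xb + 1)" using c0 by simp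
    ultimately show ?thesis by linarith
  qed
  define K where "K = (real n + 1) / c + 1"
  have "eventually (\<lambda>s. \<forall>j\<in>J. K \<le> pY m (T j s xb)) (inf at_top (principal B))"
  proof (intro eventually_ball_finite finite_atLeastAtMost ballI)
    fix j assume "j \<in> J"
    then show "eventually (\<lambda>s. K \<le> pY m (T j s xb)) (inf at_top (principal B))"
      using B_lim[of j] by (simp add: filterlim_at_top)
  qed
  then have "eventually (\<lambda>s. s \<in> B \<longrightarrow> (\<forall>j\<in>J. K \<le> pY m (T j s xb))) at_top"
    by (simp add: eventually_inf_principal)
  then obtain a0 where a0: "\<And>s. a0 \<le> s \<Longrightarrow> s \<in> B \<Longrightarrow> \<forall>j\<in>J. K \<le> pY m (T j s xb)"
    by (auto simp: eventually_at_top_linorder)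
  define a where "a = max a0 f"
  have fa: "f \<le> a" unfolding a_def by simp
  obtain b where b: "(real n + 1) * (a + 2) \<le> b" "0 < b" "B \<inter> {0..b} \<in> sets lebesgue"
      "(1 - 1/(real n + 2)) * b \<le> measure lebesgue (B \<inter> {0..b})"
    using dens_freq[OF B_dens, of "1/(real n + 2)" "(real n + 1) * (a + 2)"] by auto
  define E1 where "E1 k = {s\<in>{0..b}. \<exists>j\<in>J. pY m (T j s (v k)) < pY m (T j s xb) - 1}" for k
  define E2 where "E2 k = {s\<in>{0..f}. \<exists>j\<in>J. pY n (T j s xb) + 1 < pY n (T j s (v k))}" for k
  have E1m: "E1 k \<in> sets lebesgue" for k
    unfolding E1_def
    by (rule meas_ex_lt[of J "{0..b}" "\<lambda>j s. pY m (T j s (v k))" "\<lambda>j s. pY m (T j s xb) - 1"])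
       (auto intro!: continuous_intros intro: continuous_on_subset[OF cont_P])
  have E2m: "E2 k \<in> sets lebesgue" for k
    unfolding E2_def
    by (rule meas_ex_lt[of J "{0..f}" "\<lambda>j s. pY n (T j s xb) + 1" "\<lambda>j s. pY n (T j s (v k))"])
       (auto intro!: continuous_intros intro: continuous_on_subset[OF cont_P])
  have ev1: "eventually (\<lambda>k. measure lebesgue (E1 k) \<le> 1) sequentially"
  proof (rule meas_conv[OF E1m])
    show "E1 k \<subseteq> {0..b}" for k unfolding E1_def by auto
    fix s
    show "eventually (\<lambda>k. s \<notin> E1 k) sequentially"
    proof (cases "0 \<le> s")
      case True
      have "eventually (\<lambda>k. \<forall>j\<in>J. pY m (T j s xb) - 1 < pY m (T j s (v k))) sequentially"
      proof (intro eventually_ball_finite finite_atLeastAtMost ballI)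
        fix j assume "j \<in> J"
        from P_ptw[OF v_lim this True, of m] show "eventually (\<lambda>k. pY m (T j s xb) - 1 < pY m (T j s (v k))) sequentially"
          by (rule order_tendstoD) simp
      qed
      then show ?thesis by (rule eventually_mono) (auto simp: E1_def)
    qed (simp add: E1_def)
  qed simp
  have ev2: "eventually (\<lambda>k. measure lebesgue (E2 k) \<le> (1/2)^n) sequentially"
  proof (rule meas_conv[OF E2m])
    show "E2 k \<subseteq> {0..f}" for k unfolding E2_def by auto
    fix s
    show "eventually (\<lambda>k. s \<notin> E2 k) sequentially"
    proof (cases "0 \<le> s")
      case True
      have "eventually (\<lambda>k. \<forall>j\<in>J. pY n (T j s (v k)) < pY n (T j s xb) + 1) sequentially"
      proof (intro eventually_ball_finite finite_atLeastAtMost ballI)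
        fix j assume "j \<in> J"
        from P_ptw[OF v_lim this True, of n] show "eventually (\<lambda>k. pY n (T j s (v k)) < pY n (T j s xb) + 1) sequentially"
          by (rule order_tendstoD) simp
      qed
      then show ?thesis by (rule eventually_mono) (auto simp: E2_def)
    qed (simp add: E2_def)
  qed simp
  have ev3: "eventually (\<lambda>k. XF.dd (v k) xb < (1/2)^(Suc n)) sequentially"
  proof -
    have "\<forall>\<epsilon>>0. eventually (\<lambda>k. v k \<in> UNIV \<and> XF.dd (v k) xb < \<epsilon>) sequentially"
      using v_lim unfolding XF.X.limitin_metric by blast
    then have "eventually (\<lambda>k. v k \<in> UNIV \<and> XF.dd (v k) xb < (1/2)^(Suc n)) sequentially"
      by (meson zero_less_divide_1_iff zero_less_numeral zero_less_power)
    then show ?thesis by (rule eventually_mono) simp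
  qed
  obtain k where k: "measure lebesgue (E1 k) \<le> 1" "measure lebesgue (E2 k) \<le> (1/2)^n"
      "XF.dd (v k) xb < (1/2)^(Suc n)"
    using eventually_happens'[OF _ eventually_conj[OF ev1 eventually_conj[OF ev2 ev3]]] by auto
  define y where "y = v k"
  have big: "real n + 1 \<le> c * pY m (T j s y)" if s: "s \<in> B \<inter> {a..b} - E1 k" and j: "j \<in> J" for s j
  proof -
    have s0: "0 \<le> s" "s \<le> b" "s \<in> B" "a0 \<le> s" using s B_sub unfolding a_def by auto
    have "K \<le> pY m (T j s xb)" using a0[OF s0(4,3)] j by auto
    moreover have "\<not> pY m (T j s y) < pY m (T j s xb) - 1" using s s0 j unfolding E1_def y_def by auto
    ultimately have "(real n + 1) / c \<le> pY m (T j s y)" unfolding K_def by linarith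
    then show ?thesis using c0 by (simp add: pos_divide_le_eq mult.commute)
  qed
  have small: "c * pY n (T j s y) \<le> (1/2)^(Suc n)" if s: "s \<in> {0..f} - E2 k" and j: "j \<in> J" for s j
  proof -
    have "\<not> pY n (T j s xb) + 1 < pY n (T j s y)" using s j unfolding E2_def y_def by auto
    then have "pY n (T j s y) \<le> M + 1" using Mj[of s j] s j by auto
    then have "c * pY n (T j s y) \<le> c * (M + 1)" using c0 by (intro mult_left_mono) auto
    then show ?thesis using c1 by linarith
  qed
  have dsm: "XF.dd (scX (of_real c) y) 0 \<le> (1/2)^n"
  proof -
    have "XF.dd (scX (of_real c) y) (scX (of_real c) xb) = XF.dd (scX (of_real c) (y - xb)) 0"
      by (simp add: XF.dd_0[of "scX (of_real c) y"] XF.scale_right_diff_distrib)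
    also have "\<dots> \<le> XF.dd (y - xb) 0" using c0 by (intro XF.dd_scale_le) auto
    also have "\<dots> = XF.dd y xb" by (simp add: XF.dd_0[of y])
    finally have d1: "XF.dd (scX (of_real c) y) (scX (of_real c) xb) < (1/2)^(Suc n)"
      using k(3) unfolding y_def by linarith
    have "XF.dd (scX (of_real c) xb) 0 \<le> p (Suc n) (scX (of_real c) xb) + (1/2)^(Suc (Suc n))"
      by (rule XF.dd_upper)
    also have "p (Suc n) (scX (of_real c) xb) = c * p (Suc n) xb" using c0 by (simp add: XF.p_scale)
    finally have d2: "XF.dd (scX (of_real c) xb) 0 \<le> (1/2)^(Suc n)" using c2 by simp
    have "XF.dd (scX (of_real c) y) 0 \<le> XF.dd (scX (of_real c) y) (scX (of_real c) xb) + XF.dd (scX (of_real c) xb) 0"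
      by (rule XF.dd_triangle)
    then show ?thesis using d1 d2 by simp
  qed
  have "stage_ok n F b0 c y e f a b (E1 k) (E2 k)"
    unfolding stage_ok_def
  proof (intro conjI)
    show "y \<in> X0" unfolding y_def by (rule v_X0)
    show "b0 + 1 \<le> e" "real n + 1 \<le> e" unfolding e_def by auto
    show "\<forall>u\<in>F. \<forall>s. e \<le> s \<longrightarrow> (\<forall>j\<in>J. pY n (T j s u) \<le> (1/2)^n / (real n + 1))"
      using e0 unfolding e_def \<eta>_def by auto
    show "E1 k \<subseteq> {0..b}" unfolding E1_def by auto
    show "E2 k \<subseteq> {0..f}" unfolding E2_def by auto
    show "\<forall>s\<in>B \<inter> {a..b} - E1 k. \<forall>j\<in>J. real n + 1 \<le> c * pY m (T j s y)" using big by blast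
    show "\<forall>s\<in>{0..f} - E2 k. \<forall>j\<in>J. c * pY n (T j s y) \<le> (1/2)^(Suc n)" using small by blast
  qed (use c0 fa b k E1m E2m dsm f_def in auto)
  then show ?thesis by blast
qed

end



locale setting3 = setting2 +
  fixes Fs :: "nat \<Rightarrow> _ set" and cs :: "nat \<Rightarrow> real" and ys es fss as bs :: "nat \<Rightarrow> _"
    and E1s E2s :: "nat \<Rightarrow> real set"
  assumes ok: "\<And>i. stage_ok i (Fs i) 0 (cs i) (ys i) (es i) (fss i) (as i) (bs i) (E1s i) (E2s i)"
    and Ffin: "\<And>i. finite (Fs i)" and FX0: "\<And>i. Fs i \<subseteq> X0"
    and Fnext: "\<And>i. Fs (Suc i) = insert (scX (of_real (cs i)) (ys i)) (Fs i)"
    and bnext: "\<And>i. bs i + 1 \<le> es (Suc i)"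
begin

definition "tv i = scX (of_real (cs i)) (ys i)"

lemma c_pos: "0 < cs i" and c_le1: "cs i \<le> 1" and y_X0: "ys i \<in> X0"
  and e_ge: "real i + 1 \<le> es i" and f_eq: "fss i = (real i + 1) * es i"
  and fa: "fss i \<le> as i" and ab: "(real i + 1) * (as i + 2) \<le> bs i"
  and early0: "\<And>u s j. u \<in> Fs i \<Longrightarrow> es i \<le> s \<Longrightarrow> j \<in> J \<Longrightarrow> pY i (T j s u) \<le> (1/2)^i / (real i + 1)"
  and Bm: "B \<inter> {0..bs i} \<in> sets lebesgue"
  and Bmeas: "(1 - 1/(real i + 2)) * bs i \<le> measure lebesgue (B \<inter> {0..bs i})"
  and E1m: "E1s i \<in> sets lebesgue" and E1sub: "E1s i \<subseteq> {0..bs i}" and E1le: "measure lebesgue (E1s i) \<le> 1"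
  and big0: "\<And>s j. s \<in> B \<inter> {as i..bs i} - E1s i \<Longrightarrow> j \<in> J \<Longrightarrow> real i + 1 \<le> cs i * pY m (T j s (ys i))"
  and E2m: "E2s i \<in> sets lebesgue" and E2sub: "E2s i \<subseteq> {0..fss i}" and E2le: "measure lebesgue (E2s i) \<le> (1/2)^i"
  and small0: "\<And>s j. s \<in> {0..fss i} - E2s i \<Longrightarrow> j \<in> J \<Longrightarrow> cs i * pY i (T j s (ys i)) \<le> (1/2)^(Suc i)"
  and tv_small: "XF.dd (tv i) 0 \<le> (1/2)^i"
  using ok[of i] unfolding stage_ok_def tv_def by auto

lemma tv_X0: "tv i \<in> X0"
  unfolding tv_def using y_X0 X0_subspace XF.subspace_scale by blast

lemma e_pos: "1 \<le> es i" using e_ge[of i] by simp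

lemma ef: "es i \<le> fss i"
  using f_eq[of i] e_pos[of i] by (simp add: mult_le_cancel_right1)

lemma ab': "as i \<le> bs i" using ab[of i] e_pos[of i] fa[of i] ef[of i]
  by (smt (verit) mult_le_cancel_right1 of_nat_0_le_iff)

lemma tv_in_F: "i < i' \<Longrightarrow> tv i \<in> Fs i'"
proof (induct i' rule: less_induct)
  case (less i')
  then obtain k where k: "i' = Suc k" by (cases i') auto
  show ?case
  proof (cases "i = k")
    case True then show ?thesis using k Fnext[of k] by (simp add: tv_def)
  next
    case False then have "i < k" using less k by simp
    then show ?thesis using less k Fnext[of k] by auto
  qed
qed

lemma b_le_e: "i < i' \<Longrightarrow> bs i \<le> es i'"
proof (induct i' rule: less_induct)
  case (less i')
  then obtain k where k: "i' = Suc k" by (cases i') auto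
  have "bs k \<le> es i'" using bnext[of k] k by simp
  show ?case
  proof (cases "i = k")
    case True then show ?thesis using \<open>bs k \<le> es i'\<close> by simp
  next
    case False then have "i < k" using less k by simp
    then have "bs i \<le> es k" using less k by simp
    also have "\<dots> \<le> bs k" using ef[of k] fa[of k] ab'[of k] by simp
    finally show ?thesis using \<open>bs k \<le> es i'\<close> by simp
  qed
qed

lemma b_le_f: "i < i' \<Longrightarrow> bs i \<le> fss i'"
  using b_le_e ef order_trans by blast

lemma f_mono: "i \<le> i' \<Longrightarrow> fss i \<le> fss i'"
proof (cases "i = i'")
  case False
  assume "i \<le> i'"
  then have "i < i'" using False by simp
  then have "bs i \<le> fss i'" by (rule b_le_f)
  moreover have "fss i \<le> bs i" using fa[of i] ab'[of i] by simp
  ultimately show ?thesis by simp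
qed simp

lemma early: "i' < i \<Longrightarrow> es i \<le> s \<Longrightarrow> j \<in> J \<Longrightarrow> n \<le> i \<Longrightarrow> pY n (T j s (tv i')) \<le> (1/2)^i / (real i + 1)"
  using early0[OF tv_in_F] YF.p_mono order_trans by blast

lemma late: assumes "s \<in> {0..fss i'} - E2s i'" "j \<in> J" "n \<le> i'"
  shows "pY n (T j s (tv i')) \<le> (1/2)^(Suc i')"
proof -
  have "pY n (T j s (tv i')) = cs i' * pY n (T j s (ys i'))"
    unfolding tv_def using assms c_pos[of i'] by (simp add: T_scale P_scale_real)
  also have "\<dots> \<le> cs i' * pY i' (T j s (ys i'))"
    using c_pos[of i'] YF.p_mono[OF assms(3)] by (intro mult_left_mono) auto
  also have "\<dots> \<le> (1/2)^(Suc i')" by (rule small0[OF assms(1,2)])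
  finally show ?thesis .
qed

lemma big: assumes "s \<in> B \<inter> {as i..bs i} - E1s i" "j \<in> J"
  shows "real i + 1 \<le> pY m (T j s (tv i))"
proof -
  have "0 \<le> s" using assms B_sub by auto
  then have "pY m (T j s (tv i)) = cs i * pY m (T j s (ys i))"
    unfolding tv_def using assms c_pos[of i] by (simp add: T_scale P_scale_real)
  then show ?thesis using big0[OF assms] by simp
qed


definition "zz I i = (if i \<in> I then tv i else 0)"
definition "SS I Q = (\<Sum>i\<in>{0..<Q}. zz I i)"

lemma zz_small: "XF.dd (zz I i) 0 \<le> 2 * (1/2)^(Suc i)"
  unfolding zz_def using tv_small[of i] by (auto simp: XF.dd_eq0)

lemma SS_diff: "M \<le> Q \<Longrightarrow> SS I Q - SS I M = (\<Sum>i\<in>{M..<Q}. zz I i)"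
  unfolding SS_def using sum.atLeastLessThan_concat[of 0 M Q "zz I"] by (simp add: algebra_simps)

lemma SS_Suc: "SS I (Suc i) = SS I i + zz I i"
  unfolding SS_def by simp

lemma SS_cauchy: "XF.X.MCauchy (SS I)"
  unfolding XF.X.MCauchy_def
proof (intro conjI allI impI)
  fix \<epsilon> :: real assume e: "0 < \<epsilon>"
  obtain Q0 where Q0: "(1/2::real)^Q0 < \<epsilon>/2" using real_arch_pow_inv[of "\<epsilon>/2" "1/2"] e by auto
  have key: "XF.dd (SS I n') (SS I n) < \<epsilon>" if "Q0 \<le> n" "n \<le> n'" for n n'
  proof -
    have "XF.dd (SS I n') (SS I n) = XF.dd (\<Sum>i\<in>{n..<n'}. zz I i) 0"
      using SS_diff[OF that(2)] XF.dd_0[of "SS I n'"] by simp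
    also have "\<dots> \<le> (\<Sum>i\<in>{n..<n'}. XF.dd (zz I i) 0)" by (rule XF.dd_sum)
    also have "\<dots> \<le> (\<Sum>i\<in>{n..<n'}. 2 * (1/2)^(Suc i))" by (intro sum_mono zz_small)
    also have "\<dots> = 2 * (\<Sum>i\<in>{n..<n'}. (1/2)^(Suc i))" by (simp add: sum_distrib_left)
    also have "\<dots> \<le> 2 * (1/2)^n" using geo_sum_le[of n n'] by simp
    also have "\<dots> \<le> 2 * (1/2)^Q0" using that(1) by (simp add: power_decreasing)
    finally show ?thesis using Q0 by simp
  qed
  show "\<exists>Q. \<forall>n n'. Q \<le> n \<longrightarrow> Q \<le> n' \<longrightarrow> XF.dd (SS I n) (SS I n') < \<epsilon>"
  proof (intro exI allI impI)
    fix n n' assume "Q0 \<le> n" "Q0 \<le> n'"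
    show "XF.dd (SS I n) (SS I n') < \<epsilon>"
    proof (cases "n \<le> n'")
      case True then show ?thesis using key[OF \<open>Q0 \<le> n\<close>] XF.dd_commute by metis
    next
      case False then show ?thesis using key[OF \<open>Q0 \<le> n'\<close>, of n] by simp
    qed
  qed
qed simp

lemma X_complete: "XF.X.mcomplete"
  using X_frechet by (simp add: frechet_space_def)

definition "ww I = (SOME w. limitin XF.X.mtopology (SS I) w sequentially)"

lemma ww_lim: "limitin XF.X.mtopology (SS I) (ww I) sequentially"
  using X_complete SS_cauchy[of I] unfolding XF.X.mcomplete_def ww_def by (metis someI_ex)

lemma Tww_lim: "j \<in> J \<Longrightarrow> 0 \<le> s \<Longrightarrow> limitin YF.X.mtopology (\<lambda>Q. T j s (SS I Q)) (T j s (ww I)) sequentially"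
  using continuous_map_limit[OF T_cont ww_lim] by (simp add: o_def)

lemma T_zz: "j \<in> J \<Longrightarrow> 0 \<le> s \<Longrightarrow> T j s (zz I i) = (if i \<in> I then T j s (tv i) else 0)"
  unfolding zz_def by (simp add: T_zero)

lemma K1:
  assumes j: "j \<in> J" and s: "0 \<le> s" and n: "n \<le> i0"
    and ok2: "\<And>i'. i0 \<le> i' \<Longrightarrow> s \<in> {0..fss i'} - E2s i'"
  shows "pY n (T j s (ww I) - T j s (SS I i0)) \<le> (1/2)^i0"
proof (rule YF.tail_bound[OF Tww_lim[OF j s]])
  fix Q assume Q: "i0 \<le> Q"
  have "T j s (SS I Q) - T j s (SS I i0) = (\<Sum>i\<in>{i0..<Q}. T j s (zz I i))"
    using SS_diff[OF Q, of I] by (simp add: T_diff[OF j s, symmetric] T_sum[OF j s])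
  then have "pY n (T j s (SS I Q) - T j s (SS I i0)) \<le> (\<Sum>i\<in>{i0..<Q}. pY n (T j s (zz I i)))"
    by (simp add: YF.p_sum)
  also have "\<dots> \<le> (\<Sum>i\<in>{i0..<Q}. (1/2)^(Suc i))"
  proof (rule sum_mono)
    fix i assume "i \<in> {i0..<Q}"
    then have "i0 \<le> i" by simp
    show "pY n (T j s (zz I i)) \<le> (1/2)^(Suc i)"
      using late[OF ok2[OF \<open>i0 \<le> i\<close>] j] n \<open>i0 \<le> i\<close> by (simp add: T_zz[OF j s])
  qed
  also have "\<dots> \<le> (1/2)^i0" by (rule geo_sum_le)
  finally show "pY n (T j s (SS I Q) - T j s (SS I i0)) \<le> (1/2)^i0" .
qed

lemma K2:
  assumes j: "j \<in> J" and s: "es i \<le> s" and n: "n \<le> i"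
  shows "pY n (T j s (SS I i)) \<le> (1/2)^i"
proof -
  have s0: "0 \<le> s" using s e_pos[of i] by simp
  have "pY n (T j s (SS I i)) \<le> (\<Sum>i'\<in>{0..<i}. pY n (T j s (zz I i')))"
    unfolding SS_def T_sum[OF j s0] by (rule YF.p_sum)
  also have "\<dots> \<le> (\<Sum>i'\<in>{0..<i}. (1/2)^i / (real i + 1))"
  proof (rule sum_mono)
    fix i' assume "i' \<in> {0..<i}"
    then show "pY n (T j s (zz I i')) \<le> (1/2)^i / (real i + 1)"
      using early[of i' i s j n] j s n by (simp add: T_zz[OF j s0])
  qed
  also have "\<dots> = real i * ((1/2)^i / (real i + 1))" by simp
  also have "\<dots> \<le> (1/2)^i"
  proof -
    have "real i / (real i + 1) \<le> 1" by simp
    then have "real i / (real i + 1) * (1/2::real)^i \<le> 1 * (1/2)^i" by (intro mult_right_mono) auto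
    then show ?thesis by simp
  qed
  finally show ?thesis .
qed

lemma W_small:
  assumes j: "j \<in> J" and s: "s \<in> {es i..fss i}" and nE: "\<And>i'. i \<le> i' \<Longrightarrow> s \<notin> E2s i'" and n: "n \<le> i"
  shows "pY n (T j s (ww I)) \<le> 2 * (1/2)^i"
proof -
  have s0: "0 \<le> s" using s e_pos[of i] by simp
  have "pY n (T j s (ww I) - T j s (SS I i)) \<le> (1/2)^i"
  proof (rule K1[OF j s0 n])
    fix i' assume "i \<le> i'"
    then show "s \<in> {0..fss i'} - E2s i'" using s s0 f_mono[of i i'] nE by auto
  qed
  moreover have "pY n (T j s (SS I i)) \<le> (1/2)^i" using K2[OF j _ n] s by simp
  moreover have "pY n (T j s (ww I)) \<le> pY n (T j s (ww I) - T j s (SS I i)) + pY n (T j s (SS I i))"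
    using YF.p_add[of n "T j s (ww I) - T j s (SS I i)" "T j s (SS I i)"] by simp
  ultimately show ?thesis by simp
qed

lemma W_big:
  assumes j: "j \<in> J" and s: "s \<in> B \<inter> {as i..bs i} - E1s i" and nE: "\<And>i'. i < i' \<Longrightarrow> s \<notin> E2s i'"
    and mi: "m \<le> i"
  shows "i \<in> I \<Longrightarrow> real i - 1 \<le> pY m (T j s (ww I))"
    and "i \<notin> I \<Longrightarrow> pY m (T j s (ww I)) \<le> 2 * (1/2)^i"
proof -
  have s0: "0 \<le> s" using s B_sub by auto
  have sa: "es i \<le> s" using s ef[of i] fa[of i] by auto
  have t1: "pY m (T j s (ww I) - T j s (SS I (Suc i))) \<le> (1/2)^(Suc i)"
  proof (rule K1[OF j s0])
    show "m \<le> Suc i" using mi by simp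
    fix i' assume "Suc i \<le> i'"
    then show "s \<in> {0..fss i'} - E2s i'" using s s0 b_le_f[of i i'] nE by auto
  qed
  have t2: "pY m (T j s (SS I i)) \<le> (1/2)^i" using K2[OF j sa mi] .
  have dec: "T j s (ww I) = T j s (zz I i) + (T j s (SS I i) + (T j s (ww I) - T j s (SS I (Suc i))))"
    using SS_Suc[of I i] by (simp add: T_add[OF j s0])
  have rest: "pY m (T j s (SS I i) + (T j s (ww I) - T j s (SS I (Suc i)))) \<le> (1/2)^i + (1/2)^(Suc i)"
    using YF.p_add[of m "T j s (SS I i)" "T j s (ww I) - T j s (SS I (Suc i))"] t1 t2 by simp
  have hh: "(1/2::real)^i \<le> 1" by (simp add: power_le_one)
  {
    assume iI: "i \<in> I"
    have "pY m (T j s (zz I i)) - pY m (T j s (SS I i) + (T j s (ww I) - T j s (SS I (Suc i))))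
          \<le> pY m (T j s (ww I))"
      unfolding dec[symmetric] using YF.p_rev[of m "T j s (zz I i)"] dec by metis
    moreover have "real i + 1 \<le> pY m (T j s (zz I i))" using big[OF s j] iI by (simp add: T_zz[OF j s0])
    ultimately show "real i - 1 \<le> pY m (T j s (ww I))" using rest hh by simp
  }
  {
    assume iI: "i \<notin> I"
    have "pY m (T j s (ww I)) \<le> (1/2)^i + (1/2)^(Suc i)"
      using dec rest iI by (simp add: T_zz[OF j s0])
    moreover have "(1/2::real)^(Suc i) \<le> (1/2)^i" by (simp add: power_decreasing)
    ultimately show "pY m (T j s (ww I)) \<le> 2 * (1/2)^i" by linarith
  }
qed


definition "Gbig i = (B \<inter> {0..bs i}) - ({0..<as i} \<union> E1s i \<union> (\<Union>l. E2s (l + Suc i) \<inter> {0..bs i}))"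
definition "Gsmall i = {es i..fss i} - (\<Union>l. E2s (l + i) \<inter> {0..fss i})"

lemma bnd_lmeas: "A \<subseteq> {0..b::real} \<Longrightarrow> A \<in> sets lebesgue \<Longrightarrow> A \<in> lmeasurable"
  using bounded_set_imp_lmeasurable bounded_subset[OF compact_imp_bounded[OF compact_Icc]] by blast

lemma Gbig_prop:
  assumes "s \<in> Gbig i"
  shows "s \<in> B \<inter> {as i..bs i} - E1s i" "\<And>i'. i < i' \<Longrightarrow> s \<notin> E2s i'" "s \<in> {0..bs i}"
proof -
  have s: "s \<in> B" "0 \<le> s" "s \<le> bs i" "\<not> s < as i" "s \<notin> E1s i" "\<And>l. s \<notin> E2s (l + Suc i) \<inter> {0..bs i}"
    using assms unfolding Gbig_def by auto
  show "s \<in> B \<inter> {as i..bs i} - E1s i" "s \<in> {0..bs i}" using s by auto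
  fix i' assume "i < i'"
  then have "i' = (i' - Suc i) + Suc i" by simp
  then show "s \<notin> E2s i'" using s(2,3) s(6)[of "i' - Suc i"] by auto
qed

lemma Gsmall_prop:
  assumes "s \<in> Gsmall i"
  shows "s \<in> {es i..fss i}" "\<And>i'. i \<le> i' \<Longrightarrow> s \<notin> E2s i'"
proof -
  have s: "es i \<le> s" "s \<le> fss i" "\<And>l. s \<notin> E2s (l + i) \<inter> {0..fss i}"
    using assms unfolding Gsmall_def by auto
  have s0: "0 \<le> s" using s(1) e_pos[of i] by simp
  show "s \<in> {es i..fss i}" using s by auto
  fix i' assume "i \<le> i'"
  then have "i' = (i' - i) + i" by simp
  then show "s \<notin> E2s i'" using s0 s(2) s(3)[of "i' - i"] by auto
qed

lemma E2I: "E2s k \<inter> {0..c} \<in> sets lebesgue"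
  by (intro sets.Int E2m) simp

lemma E2U: "(\<Union>l. E2s (l + k) \<inter> {0..c}) \<in> sets lebesgue"
  by (rule sets.countable_UN) (simp add: image_subset_iff E2I)

lemma Gbig_meas: "Gbig i \<in> lmeasurable \<and> (1 - 2/(real i + 1)) * bs i \<le> measure lebesgue (Gbig i)"
proof -
  define U where "U = (\<Union>l. E2s (l + Suc i) \<inter> {0..bs i})"
  have a0: "0 \<le> as i" using fa[of i] ef[of i] e_pos[of i] by simp
  have Um: "U \<in> sets lebesgue" unfolding U_def using E2U[of "Suc i"] by simp
  have Ul: "U \<in> lmeasurable" by (rule bnd_lmeas[OF _ Um]) (auto simp: U_def)
  have Ule: "measure lebesgue U \<le> (1/2)^i"
    unfolding U_def
  proof (rule meas_union_bound)
    fix l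
    show "E2s (l + Suc i) \<inter> {0..bs i} \<in> sets lebesgue" by (rule E2I)
    show "E2s (l + Suc i) \<inter> {0..bs i} \<subseteq> {0..bs i}" by auto
    have "measure lebesgue (E2s (l + Suc i) \<inter> {0..bs i}) \<le> measure lebesgue (E2s (l + Suc i))"
      by (rule measure_mono_fmeasurable[OF _ _ bnd_lmeas[OF E2sub E2m]]) (use E2I in auto)
    also have "\<dots> \<le> (1/2)^(l + Suc i)" by (rule E2le)
    finally show "measure lebesgue (E2s (l + Suc i) \<inter> {0..bs i}) \<le> (1/2)^(Suc (l + i))" by simp
  qed
  define C where "C = {0..<as i} \<union> E1s i \<union> U"
  have Cm: "C \<in> sets lebesgue" unfolding C_def using E1m Um by (intro sets.Un) simp_all
  have Cl: "C \<in> lmeasurable" by (rule bnd_lmeas[OF _ Cm]) (use E1sub ab'[of i] in \<open>auto simp: C_def U_def\<close>)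
  have "measure lebesgue C \<le> measure lebesgue ({0..<as i} \<union> E1s i) + measure lebesgue U"
    unfolding C_def using E1m Um by (intro measure_Un_le) auto
  also have "measure lebesgue ({0..<as i} \<union> E1s i) \<le> measure lebesgue {0..<as i} + measure lebesgue (E1s i)"
    using E1m by (intro measure_Un_le) auto
  finally have Cle: "measure lebesgue C \<le> as i + 2"
    using a0 E1le[of i] Ule power_le_one[of "1/2::real" i] by simp
  have Al: "B \<inter> {0..bs i} \<in> lmeasurable" by (rule bnd_lmeas[OF _ Bm]) auto
  have "measure lebesgue (B \<inter> {0..bs i}) - measure lebesgue C \<le> measure lebesgue (Gbig i)"
    unfolding Gbig_def using meas_diff_ge[OF Al Cl] by (simp add: C_def U_def)
  moreover have "(1 - 2/(real i + 1)) * bs i \<le> (1 - 1/(real i + 2)) * bs i - (as i + 2)"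
  proof -
    have b0: "bs i \<ge> 0" using a0 ab[of i] mult_nonneg_nonneg[of "real i + 1" "as i + 2"] by linarith
    have "as i + 2 \<le> bs i / (real i + 1)" using ab[of i] by (simp add: field_simps)
    moreover have "1/(real i + 2) * bs i \<le> 1/(real i + 1) * bs i"
      using b0 by (intro mult_right_mono) (auto simp: frac_le)
    moreover have "(1 - 2/(real i + 1)) * bs i = bs i - 2 * (bs i / (real i + 1))" by (simp add: field_simps)
    moreover have "(1 - 1/(real i + 2)) * bs i = bs i - bs i / (real i + 2)" by (simp add: field_simps)
    ultimately show ?thesis by simp
  qed
  ultimately have "(1 - 2/(real i + 1)) * bs i \<le> measure lebesgue (Gbig i)"
    using Bmeas[of i] Cle by linarith
  moreover have "Gbig i \<in> lmeasurable"
    unfolding Gbig_def by (rule fmeasurable_Diff[OF Al]) (use Cm in \<open>simp add: C_def U_def\<close>)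
  ultimately show ?thesis by simp
qed

lemma Gsmall_meas: assumes "1 \<le> i" shows "Gsmall i \<in> lmeasurable \<and> (1 - 2/(real i + 1)) * fss i \<le> measure lebesgue (Gsmall i)"
proof -
  define U where "U = (\<Union>l. E2s (l + i) \<inter> {0..fss i})"
  have Um: "U \<in> sets lebesgue" unfolding U_def using E2U[of i] by simp
  have Ul: "U \<in> lmeasurable" by (rule bnd_lmeas[OF _ Um]) (auto simp: U_def)
  have Ule: "measure lebesgue U \<le> (1/2)^(i - 1)"
    unfolding U_def
  proof (rule meas_union_bound)
    fix l
    show "E2s (l + i) \<inter> {0..fss i} \<in> sets lebesgue" by (rule E2I)
    show "E2s (l + i) \<inter> {0..fss i} \<subseteq> {0..fss i}" by auto
    have "measure lebesgue (E2s (l + i) \<inter> {0..fss i}) \<le> measure lebesgue (E2s (l + i))"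
      by (rule measure_mono_fmeasurable[OF _ _ bnd_lmeas[OF E2sub E2m]]) (use E2I in auto)
    also have "\<dots> \<le> (1/2)^(l + i)" by (rule E2le)
    finally show "measure lebesgue (E2s (l + i) \<inter> {0..fss i}) \<le> (1/2)^(Suc (l + (i - 1)))"
      using assms by simp
  qed
  then have Ule1: "measure lebesgue U \<le> 1" using power_le_one[of "1/2::real" "i - 1"] by simp
  have Il: "{es i..fss i} \<in> lmeasurable" by simp
  have "measure lebesgue {es i..fss i} - measure lebesgue U \<le> measure lebesgue (Gsmall i)"
    unfolding Gsmall_def using meas_diff_ge[OF Il Ul] by (simp add: U_def)
  moreover have "measure lebesgue {es i..fss i} = fss i - es i" using ef[of i] by simp
  moreover have "(1 - 2/(real i + 1)) * fss i \<le> fss i - es i - 1"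
  proof -
    have ee: "es i = fss i / (real i + 1)" using f_eq[of i] by simp
    have "1 \<le> es i" by (rule e_pos)
    then have "1 \<le> fss i / (real i + 1)" using ee by simp
    then show ?thesis using ee by (simp add: algebra_simps add_divide_distrib)
  qed
  ultimately have "(1 - 2/(real i + 1)) * fss i \<le> measure lebesgue (Gsmall i)" using Ule1 by linarith
  moreover have "Gsmall i \<in> lmeasurable"
    unfolding Gsmall_def by (rule fmeasurable_Diff[OF Il]) (use Um in \<open>simp add: U_def\<close>)
  ultimately show ?thesis by simp
qed

end



context setting3
begin

lemma Vdecay:
  assumes tt: "finite tt" and X0w: "\<And>a. a \<in> tt \<Longrightarrow> w a \<in> X0" and eta: "0 < \<eta>"
  shows "\<exists>s0. \<forall>s\<ge>s0. \<forall>j\<in>J. (\<Sum>a\<in>tt. cf a * pY n (T j s (w a))) < \<eta>"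
proof -
  have "eventually (\<lambda>s. \<forall>j\<in>J. (\<Sum>a\<in>tt. cf a * pY n (T j s (w a))) < \<eta>) at_top"
  proof (intro eventually_ball_finite finite_atLeastAtMost ballI)
    fix j assume j: "j \<in> J"
    have "((\<lambda>s. (\<Sum>a\<in>tt. cf a * pY n (T j s (w a)))) \<longlongrightarrow> (\<Sum>a\<in>tt. cf a * 0)) at_top"
      by (intro tendsto_sum tendsto_mult tendsto_const P_to0[OF j] X0w)
    then show "eventually (\<lambda>s. (\<Sum>a\<in>tt. cf a * pY n (T j s (w a))) < \<eta>) at_top"
      using eta by (auto dest: order_tendstoD(2))
  qed
  then show ?thesis by (auto simp: eventually_at_top_linorder)
qed

lemma meas_D:
  assumes "x' = x" "y' = y"
  shows "(\<Inter>j\<in>J. {s. 0 \<le> s \<and> Q (YF.dd (T j s x) (T j s y))}) \<inter> {0..t} =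
         {s\<in>{0..t}. \<forall>j\<in>J. Q (YF.dd (T j s x') (T j s y'))}"
  using assms by auto

lemma dcont: "j \<in> J \<Longrightarrow> continuous_on {0..t} (\<lambda>s. YF.dd (T j s x) (T j s y))"
proof -
  assume j: "j \<in> J"
  have "continuous_map (top_of_set {0..}) euclidean (\<lambda>s. YF.dd (T j s x) (T j s y))"
    by (rule YF.dd_cont[OF T_strong[OF j] T_strong[OF j]])
  then show ?thesis by (simp add: continuous_on_subset)
qed


lemma main3:
  "\<exists>S \<sigma>. module.subspace scX S \<and> (seminorm_topology p) closure_of S = UNIV \<and> \<sigma> > 0 \<and>
     (\<forall>\<epsilon>>0. \<forall>x\<in>S. \<forall>y\<in>S. x \<noteq> y \<longrightarrow>
        upper_density (\<Inter>j\<in>{1..N}. {s. s \<ge> 0 \<and> seminorm_metric pY (T j s x) (T j s y) \<ge> \<sigma>}) = 1 \<and>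
        upper_density (\<Inter>j\<in>{1..N}. {s. s \<ge> 0 \<and> seminorm_metric pY (T j s x) (T j s y) < \<epsilon>}) = 1)"
proof -
  obtain C where C: "countable C" "XF.X.mtopology closure_of C = UNIV"
    using X_separable unfolding separable_space_def by auto
  define Ik where "Ik k = {i. fst (prod_decode i) = k}" for k
  define u where "u k = from_nat_into C (fst (prod_decode k))" for k
  have "\<forall>k. \<exists>y\<in>X0. XF.dd (u k - ww (Ik k)) y < 1/(real k + 1)"
  proof
    fix k
    have "u k - ww (Ik k) \<in> XF.X.mtopology closure_of X0" using X0_dense by simp
    then show "\<exists>y\<in>X0. XF.dd (u k - ww (Ik k)) y < 1/(real k + 1)"
      unfolding XF.X.metric_closure_of by auto
  qed
  then obtain vv where vv: "\<And>k. vv k \<in> X0" "\<And>k. XF.dd (u k - ww (Ik k)) (vv k) < 1/(real k + 1)"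
    by metis
  define g where "g k = vv k + ww (Ik k)" for k
  have gu: "XF.dd (u k) (g k) < 1/(real k + 1)" for k
  proof -
    have "XF.dd (u k) (g k) = XF.dd (u k - ww (Ik k)) (vv k)"
      using XF.dd_0[of "u k" "g k"] XF.dd_0[of "u k - ww (Ik k)" "vv k"] by (simp add: g_def algebra_simps)
    then show ?thesis using vv(2)[of k] by simp
  qed
  define S where "S = XF.span (range g)"
  have Ssub: "XF.subspace S" unfolding S_def by simp
  have Sdense: "XF.X.mtopology closure_of S = UNIV"
    unfolding XF.X.metric_closure_of
  proof safe
    fix x and r :: real assume r: "0 < r"
    have "x \<in> XF.X.mtopology closure_of C" using C(2) by simp
    then have "\<forall>r>0. \<exists>y\<in>C. y \<in> XF.X.mball x r"
      unfolding XF.X.metric_closure_of by blast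
    then obtain c where c: "c \<in> C" "c \<in> XF.X.mball x (r/2)" using r by (meson half_gt_zero)
    then have c: "c \<in> C" "XF.dd x c < r/2" by auto
    obtain n0 :: nat where n0: "inverse (real (Suc n0)) < r/2" using reals_Archimedean r by (metis half_gt_zero)
    define k where "k = prod_encode (to_nat_on C c, n0)"
    have uk: "u k = c" unfolding u_def k_def using C(1) c(1) by simp
    have "n0 \<le> k" unfolding k_def by (rule le_prod_encode_2)
    then have "1/(real k + 1) \<le> inverse (real (Suc n0))" by (simp add: inverse_eq_divide frac_le)
    then have "XF.dd c (g k) < r/2" using gu[of k] uk n0 by simp
    then have "XF.dd x (g k) < r" using c(2) XF.dd_triangle[of x "g k" c] by simp
    moreover have "g k \<in> S" unfolding S_def by (intro XF.span_base) simp
    ultimately show "\<exists>y\<in>S. y \<in> XF.X.mball x r" by auto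
  qed
  define \<sigma> where "\<sigma> = (1/2::real)^(Suc m) * YF.tm 1"
  have \<sigma>: "0 < \<sigma>" unfolding \<sigma>_def by (simp add: YF.tm_pos)
  have main: "upper_density (\<Inter>j\<in>J. {s. 0 \<le> s \<and> \<sigma> \<le> YF.dd (T j s x) (T j s y)}) = 1 \<and>
              upper_density (\<Inter>j\<in>J. {s. 0 \<le> s \<and> YF.dd (T j s x) (T j s y) < \<epsilon>}) = 1"
    if xS: "x \<in> S" and yS: "y \<in> S" and xy: "x \<noteq> y" and eps: "0 < \<epsilon>" for x y \<epsilon>
  proof -
    define z where "z = x - y"
    have zS: "z \<in> S" unfolding z_def using Ssub xS yS by (rule XF.subspace_diff)
    have z0: "z \<noteq> 0" using xy unfolding z_def by simp
    have dz: "YF.dd (T j s x) (T j s y) = YF.dd (T j s z) 0" if "j \<in> J" "0 \<le> s" for j s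
      using YF.dd_0[of "T j s x" "T j s y"] that by (simp add: z_def T_diff)
    obtain tt rr where tt: "finite tt" "tt \<subseteq> range g" and zrep: "z = (\<Sum>a\<in>tt. scX (rr a) a)"
      using zS unfolding S_def XF.span_explicit by blast
    obtain a0 where a0: "a0 \<in> tt" "rr a0 \<noteq> 0"
    proof (rule ccontr)
      assume "\<not> thesis"
      then have "\<forall>a\<in>tt. rr a = 0" using that by blast
      then have "z = 0" unfolding zrep by simp
      then show False using z0 by simp
    qed
    define \<kappa> where "\<kappa> a = inv_into UNIV g a" for a
    have g\<kappa>: "g (\<kappa> a) = a" if "a \<in> tt" for a
      unfolding \<kappa>_def using tt(2) that by (auto intro: f_inv_into_f)
    have \<kappa>ne: "\<kappa> a \<noteq> \<kappa> a0" if "a \<in> tt - {a0}" for a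
      using g\<kappa>[of a] g\<kappa>[of a0] that a0 by auto
    define V where "V a j s = T j s (vv (\<kappa> a))" for a j s
    define W where "W a j s = T j s (ww (Ik (\<kappa> a)))" for a j s
    have split: "T j s z = scY (rr a0) (W a0 j s) + ((\<Sum>a\<in>tt. scY (rr a) (V a j s)) + (\<Sum>a\<in>tt-{a0}. scY (rr a) (W a j s)))"
      if j: "j \<in> J" and s: "0 \<le> s" for j s
    proof -
      have "T j s z = (\<Sum>a\<in>tt. scY (rr a) (V a j s + W a j s))"
        unfolding zrep T_sum[OF j s] T_scale[OF j s]
      proof (rule sum.cong[OF refl])
        fix a assume "a \<in> tt"
        then have "T j s a = V a j s + W a j s"
          using g\<kappa>[of a] T_add[OF j s] unfolding V_def W_def g_def by metis
        then show "scY (rr a) (T j s a) = scY (rr a) (V a j s + W a j s)" by simp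
      qed
      also have "\<dots> = (\<Sum>a\<in>tt. scY (rr a) (V a j s)) + (\<Sum>a\<in>tt. scY (rr a) (W a j s))"
        by (simp add: YF.scale_right_distrib sum.distrib)
      also have "(\<Sum>a\<in>tt. scY (rr a) (W a j s)) = scY (rr a0) (W a0 j s) + (\<Sum>a\<in>tt-{a0}. scY (rr a) (W a j s))"
        using tt(1) a0(1) by (rule sum.remove)
      finally show ?thesis by (simp add: algebra_simps)
    qed
    define R where "R = (\<Sum>a\<in>tt. norm (rr a))"
    have R0: "0 \<le> R" unfolding R_def by (simp add: sum_nonneg)
    define \<rho> where "\<rho> = norm (rr a0)"
    have \<rho>: "0 < \<rho>" unfolding \<rho>_def using a0 by simp
    have upper: "pY n (T j s z) \<le> (\<Sum>a\<in>tt. norm (rr a) * pY n (V a j s)) + (\<Sum>a\<in>tt. norm (rr a) * pY n (W a j s))"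
      if j: "j \<in> J" and s: "0 \<le> s" for j s n
    proof -
      have "T j s z = (\<Sum>a\<in>tt. scY (rr a) (V a j s)) + (\<Sum>a\<in>tt. scY (rr a) (W a j s))"
        using split[OF j s] tt(1) a0(1) by (simp add: sum.remove[of tt a0 "\<lambda>a. scY (rr a) (W a j s)"] algebra_simps)
      then have "pY n (T j s z) \<le> pY n (\<Sum>a\<in>tt. scY (rr a) (V a j s)) + pY n (\<Sum>a\<in>tt. scY (rr a) (W a j s))"
        using YF.p_add by simp
      also have "\<dots> \<le> (\<Sum>a\<in>tt. pY n (scY (rr a) (V a j s))) + (\<Sum>a\<in>tt. pY n (scY (rr a) (W a j s)))"
        by (intro add_mono YF.p_sum)
      finally show ?thesis by (simp add: YF.p_scale)
    qed
    have lower: "\<rho> * pY m (W a0 j s) - (\<Sum>a\<in>tt. norm (rr a) * pY m (V a j s)) - (\<Sum>a\<in>tt-{a0}. norm (rr a) * pY m (W a j s))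
        \<le> pY m (T j s z)"
      if j: "j \<in> J" and s: "0 \<le> s" for j s
    proof -
      have "pY m ((\<Sum>a\<in>tt. scY (rr a) (V a j s)) + (\<Sum>a\<in>tt-{a0}. scY (rr a) (W a j s)))
            \<le> (\<Sum>a\<in>tt. pY m (scY (rr a) (V a j s))) + (\<Sum>a\<in>tt-{a0}. pY m (scY (rr a) (W a j s)))"
        by (rule order_trans[OF YF.p_add add_mono[OF YF.p_sum YF.p_sum]])
      then have "pY m ((\<Sum>a\<in>tt. scY (rr a) (V a j s)) + (\<Sum>a\<in>tt-{a0}. scY (rr a) (W a j s)))
            \<le> (\<Sum>a\<in>tt. norm (rr a) * pY m (V a j s)) + (\<Sum>a\<in>tt-{a0}. norm (rr a) * pY m (W a j s))"
        by (simp add: YF.p_scale)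
      moreover have "pY m (scY (rr a0) (W a0 j s)) - pY m ((\<Sum>a\<in>tt. scY (rr a) (V a j s)) + (\<Sum>a\<in>tt-{a0}. scY (rr a) (W a j s)))
          \<le> pY m (T j s z)"
        unfolding split[OF j s] by (rule YF.p_rev)
      ultimately show ?thesis by (simp add: YF.p_scale \<rho>_def)
    qed
    have Vs: "\<And>a. a \<in> tt \<Longrightarrow> vv (\<kappa> a) \<in> X0" using vv(1) by simp
    have part1: "upper_density (\<Inter>j\<in>J. {s. 0 \<le> s \<and> \<sigma> \<le> YF.dd (T j s x) (T j s y)}) = 1"
    proof (rule dens_one)
      fix \<delta> t0 :: real assume \<delta>: "0 < \<delta>"
      have "\<exists>s0. \<forall>s\<ge>s0. \<forall>j\<in>J. (\<Sum>a\<in>tt. norm (rr a) * pY m (V a j s)) < 1"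
        unfolding V_def by (rule Vdecay) (use tt(1) Vs in auto)
      then obtain s0 where s0: "\<And>s j. s0 \<le> s \<Longrightarrow> j \<in> J \<Longrightarrow> (\<Sum>a\<in>tt. norm (rr a) * pY m (V a j s)) < 1"
        by blast
      obtain n :: nat where n: "max (real m) (max s0 (max t0 (max (2/\<delta>) ((2*R + 2)/\<rho> + 1)))) \<le> real n"
        using real_arch_simple by blast
      define i where "i = prod_encode (\<kappa> a0, n)"
      have ni: "n \<le> i" unfolding i_def by (rule le_prod_encode_2)
      then have ni': "real n \<le> real i" by simp
      have iI: "i \<in> Ik (\<kappa> a0)" unfolding i_def Ik_def by simp
      have iI': "i \<notin> Ik (\<kappa> a)" if "a \<in> tt - {a0}" for a
        using \<kappa>ne[OF that] iI unfolding Ik_def by auto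
      have mi: "m \<le> i" using n ni' by simp
      have b_ge: "real i + 1 \<le> bs i" using e_ge[of i] ef[of i] fa[of i] ab'[of i] by simp
      have Gsub: "Gbig i \<subseteq> (\<Inter>j\<in>J. {s. 0 \<le> s \<and> \<sigma> \<le> YF.dd (T j s x) (T j s y)}) \<inter> {0..bs i}"
      proof
        fix s assume sG: "s \<in> Gbig i"
        note sp = Gbig_prop[OF sG]
        have s0': "0 \<le> s" "s \<le> bs i" using sp(3) by auto
        have sges0: "s0 \<le> s"
        proof -
          have "s0 \<le> real i + 1" using n ni' by simp
          also have "\<dots> \<le> es i" by (rule e_ge)
          also have "\<dots> \<le> as i" using ef[of i] fa[of i] by simp
          also have "\<dots> \<le> s" using sp(1) by simp
          finally show ?thesis .
        qed
        have "\<sigma> \<le> YF.dd (T j s x) (T j s y)" if j: "j \<in> J" for j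
        proof -
          have w0: "real i - 1 \<le> pY m (W a0 j s)"
            unfolding W_def by (rule W_big(1)[OF j sp(1) sp(2) mi iI])
          have w1: "(\<Sum>a\<in>tt-{a0}. norm (rr a) * pY m (W a j s)) \<le> (\<Sum>a\<in>tt-{a0}. norm (rr a) * 2)"
          proof (rule sum_mono)
            fix a assume a: "a \<in> tt - {a0}"
            have "pY m (W a j s) \<le> 2 * (1/2)^i"
              unfolding W_def by (rule W_big(2)[OF j sp(1) sp(2) mi iI'[OF a]])
            also have "\<dots> \<le> 2" by (simp add: power_le_one)
            finally show "norm (rr a) * pY m (W a j s) \<le> norm (rr a) * 2" by (intro mult_left_mono) auto
          qed
          have "(\<Sum>a\<in>tt-{a0}. norm (rr a) * 2) \<le> 2 * R"
            unfolding R_def sum_distrib_right[symmetric] using tt(1)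
            by (simp add: mult.commute sum_mono2)
          with w1 have w1': "(\<Sum>a\<in>tt-{a0}. norm (rr a) * pY m (W a j s)) \<le> 2 * R" by simp
          have v1: "(\<Sum>a\<in>tt. norm (rr a) * pY m (V a j s)) < 1" by (rule s0[OF sges0 j])
          have "\<rho> * (real i - 1) \<le> \<rho> * pY m (W a0 j s)" using w0 \<rho> by simp
          moreover have "2 * R + 2 \<le> \<rho> * (real i - 1)"
          proof -
            have "(2*R + 2)/\<rho> \<le> real i - 1" using n ni' by simp
            then show ?thesis using \<rho> by (simp add: pos_divide_le_eq mult.commute)
          qed
          ultimately have "1 \<le> pY m (T j s z)" using lower[OF j s0'(1)] w1' v1 by linarith
          then have "YF.tm 1 \<le> YF.tm (pY m (T j s z))" by (intro YF.tm_mono) auto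
          then have "\<sigma> \<le> (1/2)^(Suc m) * YF.tm (pY m (T j s z))" unfolding \<sigma>_def by simp
          also have "\<dots> \<le> YF.dd (T j s z) 0" by (rule YF.dd_lower)
          finally show ?thesis using dz[OF j s0'(1)] by simp
        qed
        then show "s \<in> (\<Inter>j\<in>J. {s. 0 \<le> s \<and> \<sigma> \<le> YF.dd (T j s x) (T j s y)}) \<inter> {0..bs i}"
          using s0' by auto
      qed
      have Dm: "(\<Inter>j\<in>J. {s. 0 \<le> s \<and> \<sigma> \<le> YF.dd (T j s x) (T j s y)}) \<inter> {0..bs i} \<in> lmeasurable"
      proof (rule bnd_lmeas)
        show "(\<Inter>j\<in>J. {s. 0 \<le> s \<and> \<sigma> \<le> YF.dd (T j s x) (T j s y)}) \<inter> {0..bs i} \<subseteq> {0..bs i}" by blast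
        have "{s\<in>{0..bs i}. \<forall>j\<in>J. \<sigma> \<le> YF.dd (T j s x) (T j s y)} \<in> sets lebesgue"
          by (rule meas_all_le[of J "{0..bs i}" "\<lambda>j s. \<sigma>" "\<lambda>j s. YF.dd (T j s x) (T j s y)"])
             (auto intro: dcont)
        then show "(\<Inter>j\<in>J. {s. 0 \<le> s \<and> \<sigma> \<le> YF.dd (T j s x) (T j s y)}) \<inter> {0..bs i} \<in> sets lebesgue"
          using meas_D[of x x y y "\<lambda>d. \<sigma> \<le> d" "bs i"] by simp
      qed
      have "(1 - \<delta>) * bs i \<le> (1 - 2/(real i + 1)) * bs i"
      proof (rule mult_right_mono)
        have "2/\<delta> \<le> real i + 1" using n ni' by simp
        then have "2 \<le> \<delta> * (real i + 1)" using \<delta> by (simp add: pos_divide_le_eq mult.commute)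
        then show "1 - \<delta> \<le> 1 - 2/(real i + 1)" by (simp add: divide_le_eq mult.commute)
        show "0 \<le> bs i" using b_ge by simp
      qed
      also have "\<dots> \<le> measure lebesgue (Gbig i)" using Gbig_meas[of i] by simp
      also have "\<dots> \<le> measure lebesgue ((\<Inter>j\<in>J. {s. 0 \<le> s \<and> \<sigma> \<le> YF.dd (T j s x) (T j s y)}) \<inter> {0..bs i})"
        by (rule measure_mono_fmeasurable[OF Gsub _ Dm]) (use Gbig_meas[of i] in auto)
      finally show "\<exists>t\<ge>t0. 0 < t \<and> (1 - \<delta>) * t \<le> measure lebesgue ((\<Inter>j\<in>J. {s. 0 \<le> s \<and> \<sigma> \<le> YF.dd (T j s x) (T j s y)}) \<inter> {0..t})"
        using b_ge n ni' by (intro exI[of _ "bs i"]) auto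
    qed
    have part2: "upper_density (\<Inter>j\<in>J. {s. 0 \<le> s \<and> YF.dd (T j s x) (T j s y) < \<epsilon>}) = 1"
    proof (rule dens_one)
      fix \<delta> t0 :: real assume \<delta>: "0 < \<delta>"
      obtain L :: nat where L: "(1/2::real)^L < \<epsilon>/2" using real_arch_pow_inv[of "\<epsilon>/2" "1/2::real"] eps by auto
      have L': "(1/2::real)^(Suc L) < \<epsilon>/2"
      proof -
        have "(1/2::real)^(Suc L) \<le> (1/2)^L" by (rule power_decreasing) auto
        then show ?thesis using L by linarith
      qed
      have "\<exists>s1. \<forall>s\<ge>s1. \<forall>j\<in>J. (\<Sum>a\<in>tt. norm (rr a) * pY L (V a j s)) < \<epsilon>/4"
        unfolding V_def by (rule Vdecay) (use tt(1) Vs eps in auto)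
      then obtain s1 where s1: "\<And>s j. s1 \<le> s \<Longrightarrow> j \<in> J \<Longrightarrow> (\<Sum>a\<in>tt. norm (rr a) * pY L (V a j s)) < \<epsilon>/4"
        by blast
      obtain K0 :: nat where K0: "(1/2::real)^K0 < \<epsilon>/(8 * (R + 1))"
        using real_arch_pow_inv[of "\<epsilon>/(8 * (R + 1))" "1/2::real"] eps R0 by auto
      obtain i :: nat where n: "max (real L) (max (real K0) (max 1 (max s1 (max t0 (2/\<delta>))))) \<le> real i"
        using real_arch_simple by blast
      have Li: "L \<le> i" using n by simp
      have i1: "1 \<le> i" using n by simp
      have f_ge: "real i + 1 \<le> fss i" using e_ge[of i] ef[of i] by simp
      have Gsub: "Gsmall i \<subseteq> (\<Inter>j\<in>J. {s. 0 \<le> s \<and> YF.dd (T j s x) (T j s y) < \<epsilon>}) \<inter> {0..fss i}"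
      proof
        fix s assume sG: "s \<in> Gsmall i"
        note sp = Gsmall_prop[OF sG]
        have s0': "0 \<le> s" "s \<le> fss i" using sp(1) e_pos[of i] by auto
        have sges1: "s1 \<le> s"
        proof -
          have "s1 \<le> real i + 1" using n by simp
          also have "\<dots> \<le> es i" by (rule e_ge)
          also have "\<dots> \<le> s" using sp(1) by simp
          finally show ?thesis .
        qed
        have "YF.dd (T j s x) (T j s y) < \<epsilon>" if j: "j \<in> J" for j
        proof -
          have "(\<Sum>a\<in>tt. norm (rr a) * pY L (W a j s)) \<le> (\<Sum>a\<in>tt. norm (rr a) * (2 * (1/2)^i))"
          proof (rule sum_mono)
            fix a assume "a \<in> tt"
            have "pY L (W a j s) \<le> 2 * (1/2)^i" unfolding W_def by (rule W_small[OF j sp(1) sp(2) Li])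
            then show "norm (rr a) * pY L (W a j s) \<le> norm (rr a) * (2 * (1/2)^i)" by (intro mult_left_mono) auto
          qed
          also have "\<dots> = R * (2 * (1/2)^i)" unfolding R_def by (simp add: sum_distrib_right)
          also have "\<dots> \<le> R * (2 * (1/2)^K0)"
            using R0 n by (intro mult_left_mono) (auto intro!: power_decreasing)
          also have "\<dots> \<le> R * (2 * (\<epsilon>/(8 * (R + 1))))"
            using R0 K0 by (intro mult_left_mono) auto
          also have "\<dots> \<le> \<epsilon>/4"
          proof -
            have "R * (2 * (\<epsilon>/(8 * (R + 1)))) = (\<epsilon>/4) * (R / (R + 1))" using R0 by (simp add: field_simps)
            also have "\<dots> \<le> (\<epsilon>/4) * 1" using R0 eps by (intro mult_left_mono) auto
            finally show ?thesis by simp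
          qed
          finally have w: "(\<Sum>a\<in>tt. norm (rr a) * pY L (W a j s)) \<le> \<epsilon>/4" .
          have "pY L (T j s z) < \<epsilon>/2" using upper[OF j s0'(1), of L] s1[OF sges1 j] w by simp
          then have "YF.dd (T j s z) 0 < \<epsilon>" using YF.dd_upper[of "T j s z" L] L' by simp
          then show ?thesis using dz[OF j s0'(1)] by simp
        qed
        then show "s \<in> (\<Inter>j\<in>J. {s. 0 \<le> s \<and> YF.dd (T j s x) (T j s y) < \<epsilon>}) \<inter> {0..fss i}"
          using s0' by auto
      qed
      have Dm: "(\<Inter>j\<in>J. {s. 0 \<le> s \<and> YF.dd (T j s x) (T j s y) < \<epsilon>}) \<inter> {0..fss i} \<in> lmeasurable"
      proof (rule bnd_lmeas)
        show "(\<Inter>j\<in>J. {s. 0 \<le> s \<and> YF.dd (T j s x) (T j s y) < \<epsilon>}) \<inter> {0..fss i} \<subseteq> {0..fss i}" by blast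
        have "{s\<in>{0..fss i}. \<forall>j\<in>J. YF.dd (T j s x) (T j s y) < \<epsilon>} \<in> sets lebesgue"
          by (rule meas_all_lt[of J "{0..fss i}" "\<lambda>j s. YF.dd (T j s x) (T j s y)" "\<lambda>j s. \<epsilon>"])
             (auto intro: dcont)
        then show "(\<Inter>j\<in>J. {s. 0 \<le> s \<and> YF.dd (T j s x) (T j s y) < \<epsilon>}) \<inter> {0..fss i} \<in> sets lebesgue"
          using meas_D[of x x y y "\<lambda>d. d < \<epsilon>" "fss i"] by simp
      qed
      have "(1 - \<delta>) * fss i \<le> (1 - 2/(real i + 1)) * fss i"
      proof (rule mult_right_mono)
        have "2/\<delta> \<le> real i + 1" using n by simp
        then have "2 \<le> \<delta> * (real i + 1)" using \<delta> by (simp add: pos_divide_le_eq mult.commute)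
        then show "1 - \<delta> \<le> 1 - 2/(real i + 1)" by (simp add: divide_le_eq mult.commute)
        show "0 \<le> fss i" using f_ge by simp
      qed
      also have "\<dots> \<le> measure lebesgue (Gsmall i)" using Gsmall_meas[OF i1] by simp
      also have "\<dots> \<le> measure lebesgue ((\<Inter>j\<in>J. {s. 0 \<le> s \<and> YF.dd (T j s x) (T j s y) < \<epsilon>}) \<inter> {0..fss i})"
        by (rule measure_mono_fmeasurable[OF Gsub _ Dm]) (use Gsmall_meas[OF i1] in auto)
      finally show "\<exists>t\<ge>t0. 0 < t \<and> (1 - \<delta>) * t \<le> measure lebesgue ((\<Inter>j\<in>J. {s. 0 \<le> s \<and> YF.dd (T j s x) (T j s y) < \<epsilon>}) \<inter> {0..t})"
        using f_ge n by (intro exI[of _ "fss i"]) auto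
    qed
    show ?thesis using part1 part2 by simp
  qed
  show ?thesis
    by (rule exI[of _ S], rule exI[of _ \<sigma>]) (use Ssub Sdense \<sigma> main in auto)
qed

end



context setting2
begin

lemma stage_ok_b0: "stage_ok n F b0 c y e f a b E1 E2 \<Longrightarrow> 0 \<le> b0 \<Longrightarrow> stage_ok n F 0 c y e f a b E1 E2"
  unfolding stage_ok_def by auto

lemma stage_ok_b: "stage_ok n F b0 c y e f a b E1 E2 \<Longrightarrow> 0 \<le> b"
proof -
  assume h: "stage_ok n F b0 c y e f a b E1 E2"
  then have "real n + 1 \<le> e" "f = (real n + 1) * e" "f \<le> a" "(real n + 1) * (a + 2) \<le> b"
    unfolding stage_ok_def by auto
  then have "0 \<le> a" by (smt (verit) mult_nonneg_nonneg of_nat_0_le_iff)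
  then show ?thesis using \<open>(real n + 1) * (a + 2) \<le> b\<close> mult_nonneg_nonneg[of "real n + 1" "a + 2"] by linarith
qed

lemma main2:
  "\<exists>S \<sigma>. module.subspace scX S \<and> (seminorm_topology p) closure_of S = UNIV \<and> \<sigma> > 0 \<and>
     (\<forall>\<epsilon>>0. \<forall>x\<in>S. \<forall>y\<in>S. x \<noteq> y \<longrightarrow>
        upper_density (\<Inter>j\<in>{1..N}. {s. s \<ge> 0 \<and> seminorm_metric pY (T j s x) (T j s y) \<ge> \<sigma>}) = 1 \<and>
        upper_density (\<Inter>j\<in>{1..N}. {s. s \<ge> 0 \<and> seminorm_metric pY (T j s x) (T j s y) < \<epsilon>}) = 1)"
proof -
  define Pst where "Pst n st = (case st of (F, c, y, e, f, a, b, E1, E2) \<Rightarrow>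
     finite F \<and> F \<subseteq> X0 \<and> stage_ok n F 0 c y e f a b E1 E2)" for n :: nat and st
  define Qst where "Qst n st st' = (case st of (F, c, y, e, f, a, b, E1, E2) \<Rightarrow> case st' of (F', c', y', e', f', a', b', E1', E2') \<Rightarrow>
     F' = insert (scX (of_real c) y) F \<and> b + 1 \<le> e' \<and> Pst n st \<and> Pst (Suc n) st')" for n :: nat and st st'
  have "\<exists>st. \<forall>n. Pst n (st n) \<and> Qst n (st n) (st (Suc n))"
  proof (rule dependent_nat_choice)
    obtain c y e f a b E1 E2 where "stage_ok 0 {} 0 c y e f a b E1 E2" using stage[of "{}" 0 0] by auto
    then show "\<exists>x. Pst 0 x" unfolding Pst_def by (intro exI[of _ "({}, c, y, e, f, a, b, E1, E2)"]) simp
  next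
    fix st n assume P: "Pst n st"
    obtain F c y e f a b E1 E2 where st: "st = (F, c, y, e, f, a, b, E1, E2)" by (cases st) auto
    have F: "finite F" "F \<subseteq> X0" and ok: "stage_ok n F 0 c y e f a b E1 E2" using P unfolding Pst_def st by auto
    define F' where "F' = insert (scX (of_real c) y) F"
    have yX0: "y \<in> X0" using ok unfolding stage_ok_def by simp
    have F': "finite F'" "F' \<subseteq> X0" unfolding F'_def using F yX0 X0_subspace XF.subspace_scale by auto
    obtain c' y' e' f' a' b' E1' E2' where ok': "stage_ok (Suc n) F' b c' y' e' f' a' b' E1' E2'"
      using stage[OF F'] by blast
    have b0: "0 \<le> b" by (rule stage_ok_b[OF ok])
    have P': "Pst (Suc n) (F', c', y', e', f', a', b', E1', E2')"
      unfolding Pst_def using F' stage_ok_b0[OF ok' b0] by simp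
    have be: "b + 1 \<le> e'" using ok' unfolding stage_ok_def by simp
    show "\<exists>st'. Pst (Suc n) st' \<and> Qst n st st'"
    proof (intro exI[of _ "(F', c', y', e', f', a', b', E1', E2')"] conjI P')
      show "Qst n st (F', c', y', e', f', a', b', E1', E2')"
        unfolding Qst_def using be P P' unfolding st F'_def by simp
    qed
  qed
  then obtain st where st: "\<And>n. Pst n (st n)" "\<And>n. Qst n (st n) (st (Suc n))" by blast
  define Fs where "Fs i = fst (st i)" for i
  define cs where "cs i = fst (snd (st i))" for i
  define ys where "ys i = fst (snd (snd (st i)))" for i
  define es where "es i = fst (snd (snd (snd (st i))))" for i
  define fss where "fss i = fst (snd (snd (snd (snd (st i)))))" for i
  define as where "as i = fst (snd (snd (snd (snd (snd (st i))))))" for i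
  define bs where "bs i = fst (snd (snd (snd (snd (snd (snd (st i)))))))" for i
  define E1s where "E1s i = fst (snd (snd (snd (snd (snd (snd (snd (st i))))))))" for i
  define E2s where "E2s i = snd (snd (snd (snd (snd (snd (snd (snd (st i))))))))" for i
  have stq: "st i = (Fs i, cs i, ys i, es i, fss i, as i, bs i, E1s i, E2s i)" for i
    unfolding Fs_def cs_def ys_def es_def fss_def as_def bs_def E1s_def E2s_def by simp
  interpret S3: setting3 scX scY p pY N X0 T xb m B v Fs cs ys es fss as bs E1s E2s
  proof unfold_locales
    fix i
    show "stage_ok i (Fs i) 0 (cs i) (ys i) (es i) (fss i) (as i) (bs i) (E1s i) (E2s i)"
      "finite (Fs i)" "Fs i \<subseteq> X0"
      using st(1)[of i] unfolding Pst_def stq by auto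
    show "Fs (Suc i) = insert (scX (of_real (cs i)) (ys i)) (Fs i)" "bs i + 1 \<le> es (Suc i)"
      using st(2)[of i] unfolding Qst_def stq[of i] stq[of "Suc i"] by auto
  qed
  show ?thesis by (rule S3.main3)
qed

end

context setting
begin

lemma main1:
  assumes cond_b: "\<exists>x m B. B \<subseteq> {0..} \<and> upper_density B = 1 \<and>
        (\<forall>j\<in>{1..N}. filterlim (\<lambda>t. pY m (T j t x)) at_top (inf at_top (principal B)))"
  shows "\<exists>S \<sigma>. module.subspace scX S \<and> (seminorm_topology p) closure_of S = UNIV \<and> \<sigma> > 0 \<and>
     (\<forall>\<epsilon>>0. \<forall>x\<in>S. \<forall>y\<in>S. x \<noteq> y \<longrightarrow>
        upper_density (\<Inter>j\<in>{1..N}. {s. s \<ge> 0 \<and> seminorm_metric pY (T j s x) (T j s y) \<ge> \<sigma>}) = 1 \<and>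
        upper_density (\<Inter>j\<in>{1..N}. {s. s \<ge> 0 \<and> seminorm_metric pY (T j s x) (T j s y) < \<epsilon>}) = 1)"
proof -
  obtain xb m B where B: "B \<subseteq> {0..}" "upper_density B = 1"
    "\<And>j. j \<in> J \<Longrightarrow> filterlim (\<lambda>t. pY m (T j t xb)) at_top (inf at_top (principal B))"
    using cond_b by blast
  have "\<forall>k. \<exists>y\<in>X0. XF.dd xb y < 1/(real k + 1)"
  proof
    fix k
    have "xb \<in> XF.X.mtopology closure_of X0" using X0_dense by simp
    then show "\<exists>y\<in>X0. XF.dd xb y < 1/(real k + 1)"
      unfolding XF.X.metric_closure_of by auto
  qed
  then obtain v where v: "\<And>k. v k \<in> X0" "\<And>k. XF.dd xb (v k) < 1/(real k + 1)" by metis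
  have vlim: "limitin XF.X.mtopology v xb sequentially"
    unfolding XF.X.limitin_metric
  proof (intro conjI allI impI)
    fix \<epsilon> :: real assume e: "0 < \<epsilon>"
    obtain k0 :: nat where k0: "inverse (real (Suc k0)) < \<epsilon>" using reals_Archimedean e by blast
    show "\<forall>\<^sub>F k in sequentially. v k \<in> UNIV \<and> XF.dd (v k) xb < \<epsilon>"
      unfolding eventually_sequentially
    proof (intro exI allI impI)
      fix k assume "k0 \<le> k"
      then have "1/(real k + 1) \<le> inverse (real (Suc k0))" by (simp add: inverse_eq_divide frac_le)
      then show "v k \<in> UNIV \<and> XF.dd (v k) xb < \<epsilon>" using v(2)[of k] k0 XF.dd_commute[of xb "v k"] by simp
    qed
  qed simp
  interpret S2: setting2 scX scY p pY N X0 T xb m B v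
    by unfold_locales (use B v vlim in auto)
  show ?thesis by (rule S2.main2)
qed

end


theorem theorem2p3:
  fixes scX :: "'k::real_normed_field \<Rightarrow> 'x::ab_group_add \<Rightarrow> 'x"
    and scY :: "'k \<Rightarrow> 'y::ab_group_add \<Rightarrow> 'y"
    and p :: "nat \<Rightarrow> 'x \<Rightarrow> real"
    and pY :: "nat \<Rightarrow> 'y \<Rightarrow> real"
    and N :: nat
    and X0 :: "'x set"
    and T :: "nat \<Rightarrow> real \<Rightarrow> 'x \<Rightarrow> 'y"
  assumes field_R_or_C:
      "(\<forall>z::'k. z \<in> range of_real) \<or>
       (\<exists>i::'k. i * i = -1 \<and> (\<forall>z::'k. \<exists>a b. z = of_real a + of_real b * i))"
    and X_frechet: "frechet_space scX p"
    and Y_frechet: "frechet_space scY pY"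
    and X_separable: "separable_space (seminorm_topology p)"
    and Y_separable: "separable_space (seminorm_topology pY)"
    and X_nontrivial: "\<exists>x::'x. x \<noteq> 0"
    and Y_nontrivial: "\<exists>y::'y. y \<noteq> 0"
    and N_ge: "N \<ge> 2"
    and X0_subspace: "module.subspace scX X0"
    and X0_dense: "(seminorm_topology p) closure_of X0 = UNIV"
    and T_linear: "\<And>j t. j \<in> {1..N} \<Longrightarrow> t \<ge> 0 \<Longrightarrow> Vector_Spaces.linear scX scY (T j t)"
    and T_cont: "\<And>j t. j \<in> {1..N} \<Longrightarrow> t \<ge> 0 \<Longrightarrow>
        continuous_map (seminorm_topology p) (seminorm_topology pY) (T j t)"
    and T_strong: "\<And>j x. j \<in> {1..N} \<Longrightarrow>
        continuous_map (top_of_set {0..}) (seminorm_topology pY) (\<lambda>t. T j t x)"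
    and cond_a: "\<And>j x. j \<in> {1..N} \<Longrightarrow> x \<in> X0 \<Longrightarrow>
        limitin (seminorm_topology pY) (\<lambda>t. T j t x) 0 at_top"
    and cond_b: "\<exists>x m B. B \<subseteq> {0..} \<and> upper_density B = 1 \<and>
        (\<forall>j\<in>{1..N}. filterlim (\<lambda>t. pY m (T j t x)) at_top (inf at_top (principal B)))"
  shows "\<exists>S \<sigma>. module.subspace scX S \<and> (seminorm_topology p) closure_of S = UNIV \<and> \<sigma> > 0 \<and>
     (\<forall>\<epsilon>>0. \<forall>x\<in>S. \<forall>y\<in>S. x \<noteq> y \<longrightarrow>
        upper_density (\<Inter>j\<in>{1..N}. {s. s \<ge> 0 \<and> seminorm_metric pY (T j s x) (T j s y) \<ge> \<sigma>}) = 1 \<and>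
        upper_density (\<Inter>j\<in>{1..N}. {s. s \<ge> 0 \<and> seminorm_metric pY (T j s x) (T j s y) < \<epsilon>}) = 1)"
  proof -
  interpret S: setting scX scY p pY N X0 T
    by (rule setting.intro) (fact X_frechet Y_frechet X_separable X0_subspace X0_dense T_linear T_cont T_strong cond_a)+
  show ?thesis by (rule S.main1[OF cond_b])
qed

end
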